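(* Let $n\ge2$, $0<m\le L$, $\kappa=L/m$, let $\rho\in(0,1)$ satisfy $1/(1-\rho)\in[\sqrt{3\kappa+1}/2,(\kappa+1)/2]$, let $c\in[0,1/2]$ be the solution of $\kappa(1-\rho)\big(1-c\rho-c^2(1+\rho)\big)=(1+\rho)\big(1-c\rho-c^2(1-\rho)\big)$, and consider the two-step momentum algorithm with parameters $\alpha=(1+\rho)(1+c-c\rho)/(L(1+c))$, $\gamma=\beta=c\rho^2/\big((\alpha L-1)(1+c)\big)$. Then $$J_{\max}=(n-1)\hat J(m)+\hat J(L),\qquad J_{\min}=\hat J(m)+\hat J(L)+(n-2)\hat J(1/\alpha),$$ where $\hat J(m)=\dfrac{\sigma_w^2(1-c)^2(r\kappa+1)}{2(1-c-c\rho^2)(1+\rho)(1-c+c\rho)}$, $\hat J(L)=\dfrac{\sigma_w^2(1+c)^2(1+c-c\rho^2)}{(1-\rho^2)(1+c-c\rho)(1+c+c\rho)(1+c+c\rho^2)}$, $\hat J(1/\alpha)=\sigma_w^2$, and $r=\dfrac{(1+c)(1-c+c\rho)}{(1-c)(1+c-c\rho)}$.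
   Context: $\mathcal{Q}_m^L$ is the class of quadratic functions $f(x)=\tfrac12x^TQx-q^Tx$ on $\mathbb{R}^n$ with $q\in\mathbb{R}^n$, $Q=Q^T\succ0$ whose largest eigenvalue is $L$ and smallest is $m$; $x^\star$ is the minimizer. The noisy two-step momentum algorithm is $x^{t+2}=x^{t+1}+\beta(x^{t+1}-x^t)-\alpha\nabla f\big(x^{t+1}+\gamma(x^{t+1}-x^t)\big)+\sigma_w w^t$, with $w^t$ white noise, $\mathbb{E}[w^t]=0$, $\mathbb{E}[w^t(w^\tau)^T]=I\delta(t-\tau)$, $\sigma_w\ge0$. For $\lambda>0$ let $a(\lambda)=\beta-\gamma\alpha\lambda$, $b(\lambda)=(1+\gamma)\alpha\lambda-(1+\beta)$, $d=a+b+1$, $l=a-b+1$, $h=1-a$, and $\hat J(\lambda)=\sigma_w^2(d+l)/(2dhl)$ (evaluated at $\lambda$). Noise amplification $J=\lim_{t\to\infty}\frac1t\sum_{k=0}^t\mathbb{E}\|x^k-x^\star\|_2^2$; $J_{\max}=\max_{f\in\mathcal{Q}_m^L}J$, $J_{\min}=\min_{f\in\mathcal{Q}_m^L}J$. *)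

theory Defs
  imports "HOL-Probability.Probability"
begin

definition quad_fun :: "real^'n^'n \<Rightarrow> real^'n \<Rightarrow> real^'n \<Rightarrow> real" where
  "quad_fun Q q x = (1/2) * (x \<bullet> (Q *v x)) - q \<bullet> x"

definition quad_grad :: "real^'n^'n \<Rightarrow> real^'n \<Rightarrow> real^'n \<Rightarrow> real^'n" where
  "quad_grad Q q x = Q *v x - q"

definition quad_xstar :: "real^'n^'n \<Rightarrow> real^'n \<Rightarrow> real^'n" where
  "quad_xstar Q q = (SOME x. \<forall>y. quad_fun Q q x \<le> quad_fun Q q y)"

definition is_eigenvalue :: "real^'n^'n \<Rightarrow> real \<Rightarrow> bool" where
  "is_eigenvalue Q lam \<longleftrightarrow> (\<exists>v. v \<noteq> 0 \<and> Q *v v = lam *\<^sub>R v)"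

definition quad_class :: "real \<Rightarrow> real \<Rightarrow> ((real^'n^'n) \<times> (real^'n)) set" where
  "quad_class m L = {(Q, q). transpose Q = Q
      \<and> (\<forall>x. x \<noteq> 0 \<longrightarrow> x \<bullet> (Q *v x) > 0)
      \<and> is_eigenvalue Q L \<and> (\<forall>lam. is_eigenvalue Q lam \<longrightarrow> lam \<le> L)
      \<and> is_eigenvalue Q m \<and> (\<forall>lam. is_eigenvalue Q lam \<longrightarrow> m \<le> lam)}"

definition white_noise :: "'a measure \<Rightarrow> (nat \<Rightarrow> 'a \<Rightarrow> real^'n) \<Rightarrow> bool" where
  "white_noise M w \<longleftrightarrow> prob_space M
     \<and> (\<forall>t. w t \<in> borel_measurable M)
     \<and> (\<forall>t i. integrable M (\<lambda>\<omega>. w t \<omega> $ i) \<and> integral\<^sup>L M (\<lambda>\<omega>. w t \<omega> $ i) = 0)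
     \<and> (\<forall>t s i j. integrable M (\<lambda>\<omega>. w t \<omega> $ i * w s \<omega> $ j)
           \<and> integral\<^sup>L M (\<lambda>\<omega>. w t \<omega> $ i * w s \<omega> $ j) = (if t = s \<and> i = j then 1 else 0))"

fun mom_iter :: "real \<Rightarrow> real \<Rightarrow> real \<Rightarrow> real \<Rightarrow> real^'n^'n \<Rightarrow> real^'n
    \<Rightarrow> (nat \<Rightarrow> 'a \<Rightarrow> real^'n) \<Rightarrow> real^'n \<Rightarrow> real^'n \<Rightarrow> nat \<Rightarrow> 'a \<Rightarrow> real^'n" where
  "mom_iter \<alpha> \<beta> \<gamma> \<sigma> Q q w x0 x1 0 \<omega> = x0"
| "mom_iter \<alpha> \<beta> \<gamma> \<sigma> Q q w x0 x1 (Suc 0) \<omega> = x1"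
| "mom_iter \<alpha> \<beta> \<gamma> \<sigma> Q q w x0 x1 (Suc (Suc t)) \<omega> =
     (let y = mom_iter \<alpha> \<beta> \<gamma> \<sigma> Q q w x0 x1 (Suc t) \<omega>;
          z = mom_iter \<alpha> \<beta> \<gamma> \<sigma> Q q w x0 x1 t \<omega>
      in y + \<beta> *\<^sub>R (y - z) - \<alpha> *\<^sub>R quad_grad Q q (y + \<gamma> *\<^sub>R (y - z)) + \<sigma> *\<^sub>R w t \<omega>)"

definition noise_avg :: "'a measure \<Rightarrow> real \<Rightarrow> real \<Rightarrow> real \<Rightarrow> real \<Rightarrow> real^'n^'n \<Rightarrow> real^'n
    \<Rightarrow> (nat \<Rightarrow> 'a \<Rightarrow> real^'n) \<Rightarrow> real^'n \<Rightarrow> real^'n \<Rightarrow> nat \<Rightarrow> real" where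
  "noise_avg M \<alpha> \<beta> \<gamma> \<sigma> Q q w x0 x1 t =
     (1 / real t) * (\<Sum>k\<le>t. integral\<^sup>L M
        (\<lambda>\<omega>. (norm (mom_iter \<alpha> \<beta> \<gamma> \<sigma> Q q w x0 x1 k \<omega> - quad_xstar Q q))\<^sup>2))"

definition noise_amp :: "'a measure \<Rightarrow> real \<Rightarrow> real \<Rightarrow> real \<Rightarrow> real \<Rightarrow> real^'n^'n \<Rightarrow> real^'n
    \<Rightarrow> (nat \<Rightarrow> 'a \<Rightarrow> real^'n) \<Rightarrow> real^'n \<Rightarrow> real^'n \<Rightarrow> real" where
  "noise_amp M \<alpha> \<beta> \<gamma> \<sigma> Q q w x0 x1 = lim (noise_avg M \<alpha> \<beta> \<gamma> \<sigma> Q q w x0 x1)"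

definition Jhat :: "real \<Rightarrow> real \<Rightarrow> real \<Rightarrow> real \<Rightarrow> real \<Rightarrow> real" where
  "Jhat \<alpha> \<beta> \<gamma> \<sigma> lam =
     (let a = \<beta> - \<gamma> * \<alpha> * lam;
          b = (1 + \<gamma>) * \<alpha> * lam - (1 + \<beta>);
          d = a + b + 1; l = a - b + 1; h = 1 - a
      in \<sigma>\<^sup>2 * (d + l) / (2 * d * h * l))"

end

theory Submission
  imports Defs
begin


lemma sym_dot:
  fixes Q :: "real^'n^'n"
  assumes "transpose Q = Q"
  shows "(Q *v x) \<bullet> y = x \<bullet> (Q *v y)"
proof -
  have "Q *v x = x v* Q" using transpose_matrix_vector[of Q x] assms by simp
  then show ?thesis by (simp add: dot_lmul_matrix)
qed

lemma rayleigh_orth: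
  fixes Q :: "real^'n^'n"
  assumes sym: "transpose Q = Q"
    and v1: "norm v = 1" and uv: "u \<bullet> v = 0"
    and max: "\<And>t. (v + t *\<^sub>R u) \<bullet> (Q *v (v + t *\<^sub>R u)) \<le> (v \<bullet> (Q *v v)) * (norm (v + t *\<^sub>R u))\<^sup>2"
  shows "u \<bullet> (Q *v v) = 0"
proof (rule ccontr)
  define g where "g = u \<bullet> (Q *v v)"
  define K where "K = (v \<bullet> (Q *v v)) * (u \<bullet> u) - u \<bullet> (Q *v u)"
  define \<mu> where "\<mu> = v \<bullet> (Q *v v)"
  assume "u \<bullet> (Q *v v) \<noteq> 0"
  hence g0: "g \<noteq> 0" by (simp add: g_def)
  have vu: "v \<bullet> (Q *v u) = g" using sym_dot[OF sym, of u v] by (simp add: g_def inner_commute)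
  have vv: "v \<bullet> v = 1" using v1 by (simp add: dot_square_norm)
  have ineq: "2 * t * g \<le> t\<^sup>2 * K" for t
  proof -
    have e1: "(v + t *\<^sub>R u) \<bullet> (Q *v (v + t *\<^sub>R u)) = \<mu> + 2 * t * g + t\<^sup>2 * (u \<bullet> (Q *v u))"
      by (simp add: matrix_vector_right_distrib inner_add_left inner_add_right vu g_def \<mu>_def
          power2_eq_square algebra_simps)
    have e2: "(norm (v + t *\<^sub>R u))\<^sup>2 = 1 + t\<^sup>2 * (u \<bullet> u)"
      unfolding power2_norm_eq_inner by (simp add: inner_add_left inner_add_right vv uv inner_commute[of v u] power2_eq_square)
    show ?thesis using max[of t] unfolding e1 e2 K_def \<mu>_def[symmetric]
      by (simp add: algebra_simps)
  qed
  define t where "t = g / (\<bar>K\<bar> + 1)"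
  have Kp: "\<bar>K\<bar> + 1 > 0" by simp
  have "2 * t * g = 2 * g\<^sup>2 / (\<bar>K\<bar> + 1)" by (simp add: t_def power2_eq_square)
  moreover have "t\<^sup>2 * K \<le> t\<^sup>2 * \<bar>K\<bar>" by (simp add: mult_left_mono)
  moreover have "t\<^sup>2 * \<bar>K\<bar> = g\<^sup>2 * (\<bar>K\<bar> / (\<bar>K\<bar>+1)) / (\<bar>K\<bar> + 1)" by (simp add: t_def power2_eq_square field_simps)
  moreover have "\<bar>K\<bar> / (\<bar>K\<bar>+1) < 1" using Kp by (simp add: field_simps)
  moreover have "g\<^sup>2 > 0" using g0 by simp
  ultimately have "2 * g\<^sup>2 / (\<bar>K\<bar> + 1) \<le> g\<^sup>2 * (\<bar>K\<bar> / (\<bar>K\<bar>+1)) / (\<bar>K\<bar> + 1)"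
    using ineq[of t] by linarith
  hence "2 * g\<^sup>2 \<le> g\<^sup>2 * (\<bar>K\<bar> / (\<bar>K\<bar>+1))" using Kp
    by (metis divide_le_cancel not_less)
  moreover have "g\<^sup>2 * (\<bar>K\<bar> / (\<bar>K\<bar>+1)) < g\<^sup>2" using \<open>g\<^sup>2 > 0\<close> \<open>\<bar>K\<bar> / (\<bar>K\<bar>+1) < 1\<close>
    using mult_strict_left_mono[of "\<bar>K\<bar> / (\<bar>K\<bar>+1)" 1 "g\<^sup>2"] by simp
  ultimately show False using \<open>g\<^sup>2 > 0\<close> by linarith
qed

definition eigbasis :: "real^'n^'n \<Rightarrow> (real^'n) set \<Rightarrow> bool" where
  "eigbasis Q B \<longleftrightarrow> pairwise orthogonal B \<and> (\<forall>b\<in>B. norm b = 1 \<and> Q *v b = (b \<bullet> (Q *v b)) *\<^sub>R b)"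

lemma spectral_sub:
  fixes Q :: "real^'n^'n"
  assumes sym: "transpose Q = Q"
  shows "subspace S \<Longrightarrow> (\<forall>x\<in>S. Q *v x \<in> S) \<Longrightarrow> \<exists>B. B \<subseteq> S \<and> eigbasis Q B \<and> S \<subseteq> span B"
proof (induction "dim S" arbitrary: S rule: less_induct)
  case less
  show ?case
  proof (cases "S \<subseteq> {0}")
    case True
    then show ?thesis by (intro exI[of _ "{}"]) (auto simp: eigbasis_def)
  next
    case False
    then obtain x where xS: "x \<in> S" and x0: "x \<noteq> 0" by auto
    define K where "K = S \<inter> sphere 0 1"
    have cK: "compact K" unfolding K_def
      using closed_subspace[OF less.prems(1)] compact_sphere by (rule closed_Int_compact)
    have "x /\<^sub>R norm x \<in> K" using xS x0 less.prems(1) unfolding K_def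
      by (auto simp: subspace_mul)
    hence neK: "K \<noteq> {}" by auto
    have cont: "continuous_on K (\<lambda>y. y \<bullet> (Q *v y))"
      by (intro continuous_intros matrix_vector_mult_linear_continuous_on)
    obtain v where vK: "v \<in> K" and vmax: "\<And>y. y \<in> K \<Longrightarrow> y \<bullet> (Q *v y) \<le> v \<bullet> (Q *v v)"
      using continuous_attains_sup[OF cK neK cont] by blast
    define \<mu> where "\<mu> = v \<bullet> (Q *v v)"
    have vS: "v \<in> S" and v1: "norm v = 1" using vK by (auto simp: K_def)
    have ray: "z \<bullet> (Q *v z) \<le> \<mu> * (norm z)\<^sup>2" if zS: "z \<in> S" for z
    proof (cases "z = 0")
      case True then show ?thesis by simp
    next
      case False
      hence "z /\<^sub>R norm z \<in> K" using zS less.prems(1) by (auto simp: K_def subspace_mul)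
      hence "(z /\<^sub>R norm z) \<bullet> (Q *v (z /\<^sub>R norm z)) \<le> \<mu>" using vmax \<mu>_def by blast
      hence "(z \<bullet> (Q *v z)) / (norm z)\<^sup>2 \<le> \<mu>"
        by (simp add: matrix_vector_mult_scaleR power2_eq_square divide_inverse mult.commute mult.left_commute)
      then show ?thesis using False by (simp add: divide_le_eq mult.commute)
    qed
    have orth: "u \<bullet> (Q *v v) = 0" if uS: "u \<in> S" and uv: "u \<bullet> v = 0" for u
    proof (rule rayleigh_orth[OF sym v1 uv])
      fix t :: real
      have "v + t *\<^sub>R u \<in> S" using vS uS less.prems(1) by (simp add: subspace_add subspace_mul)
      then show "(v + t *\<^sub>R u) \<bullet> (Q *v (v + t *\<^sub>R u)) \<le> v \<bullet> (Q *v v) * (norm (v + t *\<^sub>R u))\<^sup>2"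
        using ray \<mu>_def by blast
    qed
    define wv where "wv = Q *v v - \<mu> *\<^sub>R v"
    have vv: "v \<bullet> v = 1" using v1 by (simp add: dot_square_norm)
    have wS: "wv \<in> S" using less.prems vS by (simp add: wv_def subspace_diff subspace_mul)
    have wvv: "wv \<bullet> v = 0" by (simp add: wv_def inner_diff_left vv \<mu>_def inner_commute[of "Q *v v" v])
    have "wv \<bullet> (Q *v v) = 0" using orth[OF wS wvv] .
    moreover have "wv \<bullet> wv = wv \<bullet> (Q *v v) - \<mu> * (wv \<bullet> v)"
      by (subst (2) wv_def) (simp add: inner_diff_right)
    ultimately have "wv \<bullet> wv = 0" using wvv by simp
    hence eig: "Q *v v = \<mu> *\<^sub>R v" by (simp add: wv_def)
    define S' where "S' = S \<inter> {y. v \<bullet> y = 0}"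
    have subS': "subspace S'" unfolding S'_def
      using less.prems(1) subspace_hyperplane[of v] by (rule subspace_inter)
    have invS': "\<forall>y\<in>S'. Q *v y \<in> S'"
    proof
      fix y assume "y \<in> S'"
      hence yS: "y \<in> S" and vy: "v \<bullet> y = 0" by (auto simp: S'_def)
      have "v \<bullet> (Q *v y) = (Q *v v) \<bullet> y" using sym_dot[OF sym] by simp
      also have "\<dots> = 0" using eig vy by simp
      finally show "Q *v y \<in> S'" using less.prems(2) yS by (simp add: S'_def)
    qed
    have "span S' \<subset> span S"
    proof -
      have "S' \<subseteq> S" by (auto simp: S'_def)
      moreover have "v \<notin> S'" using vv by (simp add: S'_def)
      moreover have e: "span S' = S'" "span S = S" using subS' less.prems(1) by (simp_all add: span_eq_iff)
      ultimately show ?thesis using vS unfolding e by auto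
    qed
    hence "dim S' < dim S" by (rule dim_psubset)
    from less.hyps[OF this subS' invS'] obtain B' where
      B'S: "B' \<subseteq> S'" and eB': "eigbasis Q B'" and spB': "S' \<subseteq> span B'" by blast
    define B where "B = insert v B'"
    have "B \<subseteq> S" using B'S vS by (auto simp: B_def S'_def)
    moreover have "eigbasis Q B"
      using eB' B'S v1 eig vv unfolding eigbasis_def B_def \<mu>_def
      by (auto simp: pairwise_insert orthogonal_def S'_def inner_commute)
    moreover have "S \<subseteq> span B"
    proof
      fix y assume yS: "y \<in> S"
      have "y - (v \<bullet> y) *\<^sub>R v \<in> S'" using yS vS less.prems(1) vv
        by (simp add: S'_def subspace_diff subspace_mul inner_diff_right)
      hence "y - (v \<bullet> y) *\<^sub>R v \<in> span B" using spB' span_mono[of B' B] by (auto simp: B_def)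
      moreover have "(v \<bullet> y) *\<^sub>R v \<in> span B" by (simp add: B_def span_base span_mul)
      ultimately have "(y - (v \<bullet> y) *\<^sub>R v) + (v \<bullet> y) *\<^sub>R v \<in> span B" by (rule span_add)
      then show "y \<in> span B" by simp
    qed
    ultimately show ?thesis by blast
  qed
qed

lemma eigbasis_exists:
  fixes Q :: "real^'n^'n"
  assumes sym: "transpose Q = Q"
  shows "\<exists>B. eigbasis Q B \<and> span B = UNIV"
  using spectral_sub[OF sym, of UNIV] by auto

lemma eigbasis_finite: "eigbasis Q B \<Longrightarrow> finite B"
  unfolding eigbasis_def using pairwise_orthogonal_imp_finite by blast

lemma eigbasis_card:
  fixes Q :: "real^'n^'n"
  assumes "eigbasis Q B" "span B = UNIV"
  shows "card B = CARD('n)"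
proof -
  have "0 \<notin> B" using assms(1) by (auto simp: eigbasis_def)
  hence "independent B" using assms(1) pairwise_orthogonal_independent by (auto simp: eigbasis_def)
  hence "dim (span B) = card B" by (rule dim_span_eq_card_independent)
  thus ?thesis using assms(2) by (simp add: dim_UNIV)
qed

lemma eigbasis_expand:
  fixes Q :: "real^'n^'n"
  assumes eb: "eigbasis Q B" and sp: "span B = UNIV"
  shows "x = (\<Sum>b\<in>B. (b \<bullet> x) *\<^sub>R b)"
proof -
  have fin: "finite B" using eigbasis_finite[OF eb] .
  define y where "y = x - (\<Sum>b\<in>B. (b \<bullet> x) *\<^sub>R b)"
  have "c \<bullet> y = 0" if cB: "c \<in> B" for c
  proof -
    have "c \<bullet> (\<Sum>b\<in>B. (b \<bullet> x) *\<^sub>R b) = (\<Sum>b\<in>B. (b \<bullet> x) * (c \<bullet> b))"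
      by (simp add: inner_sum_right)
    also have "\<dots> = (\<Sum>b\<in>B. if b = c then c \<bullet> x else 0)"
    proof (rule sum.cong)
      fix b assume bB: "b \<in> B"
      show "(b \<bullet> x) * (c \<bullet> b) = (if b = c then c \<bullet> x else 0)"
      proof (cases "b = c")
        case True
        have "c \<bullet> c = 1" using eb cB by (simp add: eigbasis_def dot_square_norm)
        then show ?thesis using True by simp
      next
        case False
        hence "c \<bullet> b = 0" using eb cB bB unfolding eigbasis_def pairwise_def orthogonal_def by (metis (no_types, lifting))
        then show ?thesis using False by simp
      qed
    qed simp
    also have "\<dots> = c \<bullet> x" using fin cB by (simp add: sum.delta')
    finally show ?thesis by (simp add: y_def inner_diff_right)
  qed
  hence "orthogonal y y" using sp by (metis orthogonal_to_span orthogonal_commute UNIV_I orthogonal_def)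
  hence "y = 0" by (simp add: orthogonal_def)
  thus ?thesis by (simp add: y_def)
qed

lemma eigbasis_parseval:
  fixes Q :: "real^'n^'n"
  assumes eb: "eigbasis Q B" and sp: "span B = UNIV"
  shows "(norm x)\<^sup>2 = (\<Sum>b\<in>B. (b \<bullet> x)\<^sup>2)"
proof -
  have "(norm x)\<^sup>2 = x \<bullet> x" by (simp add: power2_norm_eq_inner)
  also have "\<dots> = x \<bullet> (\<Sum>b\<in>B. (b \<bullet> x) *\<^sub>R b)" using eigbasis_expand[OF eb sp, of x] by simp
  also have "\<dots> = (\<Sum>b\<in>B. (b \<bullet> x)\<^sup>2)" by (simp add: inner_sum_right power2_eq_square inner_commute)
  finally show ?thesis .
qed

lemma eigbasis_eig:
  fixes Q :: "real^'n^'n"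
  assumes sym: "transpose Q = Q" and eb: "eigbasis Q B" and sp: "span B = UNIV"
    and v0: "v \<noteq> 0" and ev: "Q *v v = lam *\<^sub>R v"
  shows "\<exists>b\<in>B. b \<bullet> (Q *v b) = lam"
proof (rule ccontr)
  assume "\<not> ?thesis"
  hence ne: "\<And>b. b \<in> B \<Longrightarrow> b \<bullet> (Q *v b) \<noteq> lam" by blast
  have "b \<bullet> v = 0" if bB: "b \<in> B" for b
  proof -
    have "b \<bullet> (Q *v v) = (Q *v b) \<bullet> v" using sym_dot[OF sym] by simp
    also have "\<dots> = (b \<bullet> (Q *v b)) * (b \<bullet> v)" using eb bB unfolding eigbasis_def
      by (metis inner_scaleR_left)
    finally have "lam * (b \<bullet> v) = (b \<bullet> (Q *v b)) * (b \<bullet> v)" using ev by simp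
    thus ?thesis using ne[OF bB] by simp
  qed
  hence "v = 0" using eigbasis_expand[OF eb sp, of v] by simp
  thus False using v0 by simp
qed


definition P22 :: "real \<Rightarrow> real \<Rightarrow> real" where
  "P22 a b = (1 + a) / ((1 - a) * (1 + a + b) * (1 + a - b))"

definition LV :: "real \<Rightarrow> real \<Rightarrow> real \<Rightarrow> real \<Rightarrow> real" where
  "LV a b x y = (1 + a\<^sup>2 * P22 a b) * x\<^sup>2 + 2 * (a * b * P22 a b / (1 + a)) * x * y + P22 a b * y\<^sup>2"

lemma LV_step:
  assumes "1 + a > 0" "1 - a > 0" "1 + a + b > 0" "1 + a - b > 0"
  shows "LV a b y (- b * y - a * x) = LV a b x y - x\<^sup>2"
proof -
  define P where "P = P22 a b"
  define R where "R = a * b * P / (1 + a)"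
  have hP: "P * ((1 - a) * (1 + a + b) * (1 + a - b)) = 1 + a"
    using assms by (simp add: P_def P22_def)
  have hR: "R * (1 + a) = a * b * P" using assms(1) by (simp add: R_def)
  have "(1 + a\<^sup>2 * P - 2 * R * b + P * b\<^sup>2 - P) * (1 + a)
      = (1 + a) - P * ((1 - a) * (1 + a + b) * (1 + a - b)) + 2 * b * (a * b * P - R * (1 + a))"
    by (simp add: algebra_simps power2_eq_square)
  also have "\<dots> = 0" using hP hR by simp
  finally have hC: "1 + a\<^sup>2 * P - 2 * R * b + P * b\<^sup>2 - P = 0" using assms(1) by simp
  have "LV a b y (- b * y - a * x) - (LV a b x y - x\<^sup>2)
      = (1 + a\<^sup>2 * P - 2 * R * b + P * b\<^sup>2 - P) * y\<^sup>2 + 2 * (a * b * P - R * (1 + a)) * x * y"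
    unfolding LV_def P_def[symmetric] unfolding R_def[symmetric] by (simp add: algebra_simps power2_eq_square)
  also have "\<dots> = 0" using hC hR by simp
  finally show ?thesis by simp
qed

lemma LV_ge:
  assumes "1 + a > 0" "1 - a > 0" "1 + a + b > 0" "1 + a - b > 0"
  shows "LV a b x y \<ge> x\<^sup>2"
proof -
  define P where "P = P22 a b"
  define t where "t = b / (1 + a)"
  have P0: "P > 0" using assms by (simp add: P_def P22_def)
  have "\<bar>t\<bar> < 1" using assms by (simp add: t_def abs_less_iff field_simps)
  hence tt: "t\<^sup>2 < 1" by (simp add: abs_square_less_1)
  have R: "a * b * P / (1 + a) = a * t * P" by (simp add: t_def)
  have "LV a b x y = x\<^sup>2 + P * (y + a * t * x)\<^sup>2 + a\<^sup>2 * P * (1 - t\<^sup>2) * x\<^sup>2"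
    unfolding LV_def P_def[symmetric] unfolding R by (simp add: algebra_simps power2_eq_square)
  moreover have "P * (y + a * t * x)\<^sup>2 \<ge> 0" using P0 by simp
  moreover have "a\<^sup>2 * P * (1 - t\<^sup>2) * x\<^sup>2 \<ge> 0" using P0 tt by simp
  ultimately show ?thesis by linarith
qed

lemma rec_sums:
  fixes u :: "nat \<Rightarrow> real"
  assumes st: "1 + a > 0" "1 - a > 0" "1 + a + b > 0" "1 + a - b > 0"
    and rec: "\<And>k. u (Suc (Suc k)) = - b * u (Suc k) - a * u k"
  shows "(\<lambda>k. (u k)\<^sup>2) sums LV a b (u 0) (u 1)"
proof -
  have ps: "(\<Sum>k<N. (u k)\<^sup>2) = LV a b (u 0) (u 1) - LV a b (u N) (u (Suc N))" for N
  proof (induction N)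
    case 0 then show ?case by simp
  next
    case (Suc N)
    have "LV a b (u (Suc N)) (u (Suc (Suc N))) = LV a b (u N) (u (Suc N)) - (u N)\<^sup>2"
      using LV_step[OF st, of "u (Suc N)" "u N"] rec[of N] by simp
    then show ?case using Suc by simp
  qed
  have "summable (\<lambda>k. (u k)\<^sup>2)"
  proof (rule summableI_nonneg_bounded)
    fix N show "(\<Sum>k<N. (u k)\<^sup>2) \<le> LV a b (u 0) (u 1)"
      using ps[of N] LV_ge[OF st, of "u N" "u (Suc N)"] zero_le_power2[of "u N"] by linarith
  qed simp
  hence "(\<lambda>k. (u k)\<^sup>2) \<longlonglongrightarrow> 0" by (rule summable_LIMSEQ_zero)
  hence "(\<lambda>k. sqrt ((u k)\<^sup>2)) \<longlonglongrightarrow> sqrt 0" by (rule tendsto_real_sqrt)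
  hence "(\<lambda>k. \<bar>u k\<bar>) \<longlonglongrightarrow> 0" by simp
  hence u0: "u \<longlonglongrightarrow> 0" by (simp add: tendsto_rabs_zero_iff)
  hence u1: "(\<lambda>k. u (Suc k)) \<longlonglongrightarrow> 0" by (rule LIMSEQ_Suc)
  have "(\<lambda>N. LV a b (u N) (u (Suc N))) \<longlonglongrightarrow> LV a b 0 0"
    unfolding LV_def by (intro tendsto_intros u0 u1)
  hence "(\<lambda>N. LV a b (u 0) (u 1) - LV a b (u N) (u (Suc N))) \<longlonglongrightarrow> LV a b (u 0) (u 1) - 0"
    by (intro tendsto_intros) (simp add: LV_def)
  thus ?thesis unfolding sums_def ps by simp
qed

lemma rec_tendsto0:
  fixes u :: "nat \<Rightarrow> real"
  assumes st: "1 + a > 0" "1 - a > 0" "1 + a + b > 0" "1 + a - b > 0"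
    and rec: "\<And>k. u (Suc (Suc k)) = - b * u (Suc k) - a * u k"
  shows "(\<lambda>k. (u k)\<^sup>2) \<longlonglongrightarrow> 0"
proof -
  have "(\<lambda>k. (u k)\<^sup>2) sums LV a b (u 0) (u 1)" using rec_sums[of a b u] st rec by blast
  thus ?thesis using summable_LIMSEQ_zero sums_summable by blast
qed


lemma wn_scalar:
  fixes w :: "nat \<Rightarrow> 'a \<Rightarrow> real^'n"
  assumes wn: "white_noise M w" and b1: "norm b = 1"
  shows "integrable M (\<lambda>\<omega>. b \<bullet> w j \<omega>)"
    and "integral\<^sup>L M (\<lambda>\<omega>. b \<bullet> w j \<omega>) = 0"
    and "integrable M (\<lambda>\<omega>. (b \<bullet> w i \<omega>) * (b \<bullet> w j \<omega>))"
    and "integral\<^sup>L M (\<lambda>\<omega>. (b \<bullet> w i \<omega>) * (b \<bullet> w j \<omega>)) = (if i = j then 1 else 0)"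
proof -
  have W1: "\<And>t i. integrable M (\<lambda>\<omega>. w t \<omega> $ i)" "\<And>t i. integral\<^sup>L M (\<lambda>\<omega>. w t \<omega> $ i) = 0"
    using wn by (auto simp: white_noise_def)
  have W2: "\<And>t s i j. integrable M (\<lambda>\<omega>. w t \<omega> $ i * w s \<omega> $ j)"
    "\<And>t s i j. integral\<^sup>L M (\<lambda>\<omega>. w t \<omega> $ i * w s \<omega> $ j) = (if t = s \<and> i = j then 1 else 0)"
    using wn by (auto simp: white_noise_def)
  have e1: "(\<lambda>\<omega>. b \<bullet> w j \<omega>) = (\<lambda>\<omega>. \<Sum>p\<in>UNIV. b $ p * w j \<omega> $ p)" for j
    by (simp add: inner_vec_def)
  show "integrable M (\<lambda>\<omega>. b \<bullet> w j \<omega>)" unfolding e1 using W1 by (intro Bochner_Integration.integrable_sum integrable_mult_right) auto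
  show "integral\<^sup>L M (\<lambda>\<omega>. b \<bullet> w j \<omega>) = 0" unfolding e1
    using W1 by (subst Bochner_Integration.integral_sum) auto
  have e2: "(\<lambda>\<omega>. (b \<bullet> w i \<omega>) * (b \<bullet> w j \<omega>)) = (\<lambda>\<omega>. \<Sum>p\<in>UNIV. \<Sum>q\<in>UNIV. b $ p * b $ q * (w i \<omega> $ p * w j \<omega> $ q))"
    by (simp add: inner_vec_def sum_product algebra_simps)
  show "integrable M (\<lambda>\<omega>. (b \<bullet> w i \<omega>) * (b \<bullet> w j \<omega>))" unfolding e2
    using W2 by (intro Bochner_Integration.integrable_sum integrable_mult_right) auto
  have "integral\<^sup>L M (\<lambda>\<omega>. (b \<bullet> w i \<omega>) * (b \<bullet> w j \<omega>))
      = (\<Sum>p\<in>UNIV. \<Sum>q\<in>UNIV. b $ p * b $ q * (if i = j \<and> p = q then 1 else 0))"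
    unfolding e2 using W2 by (simp add: Bochner_Integration.integral_sum Bochner_Integration.integrable_sum)
  also have "\<dots> = (if i = j then (\<Sum>p\<in>UNIV. b $ p * b $ p) else 0)"
  proof (cases "i = j")
    case True
    have "(\<Sum>q\<in>UNIV. b $ p * b $ q * (if i = j \<and> p = q then 1 else 0)) = b $ p * b $ p" for p
    proof -
      have "(\<Sum>q\<in>UNIV. b $ p * b $ q * (if i = j \<and> p = q then 1 else 0)) = (\<Sum>q\<in>UNIV. if q = p then b $ p * b $ q else 0)"
        by (rule sum.cong) (auto simp: True)
      also have "\<dots> = b $ p * b $ p" by (subst sum.delta) simp_all
      finally show ?thesis .
    qed
    then show ?thesis using True by simp
  next
    case False
    then show ?thesis by simp
  qed
  also have "(\<Sum>p\<in>UNIV. b $ p * b $ p) = 1"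
  proof -
    have "b \<bullet> b = 1" using b1 by (simp add: dot_square_norm)
    thus ?thesis by (simp add: inner_vec_def)
  qed
  finally show "integral\<^sup>L M (\<lambda>\<omega>. (b \<bullet> w i \<omega>) * (b \<bullet> w j \<omega>)) = (if i = j then 1 else 0)" by simp
qed

lemma second_moment:
  fixes \<xi> :: "nat \<Rightarrow> 'a \<Rightarrow> real"
  assumes ps: "prob_space M"
    and I1: "\<And>j. integrable M (\<xi> j)" and E1: "\<And>j. integral\<^sup>L M (\<xi> j) = 0"
    and I2: "\<And>i j. integrable M (\<lambda>\<omega>. \<xi> i \<omega> * \<xi> j \<omega>)"
    and E2: "\<And>i j. integral\<^sup>L M (\<lambda>\<omega>. \<xi> i \<omega> * \<xi> j \<omega>) = (if i = j then 1 else 0)"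
  shows "integrable M (\<lambda>\<omega>. (D + \<sigma> * (\<Sum>j<k. g j * \<xi> j \<omega>))\<^sup>2)"
    and "integral\<^sup>L M (\<lambda>\<omega>. (D + \<sigma> * (\<Sum>j<k. g j * \<xi> j \<omega>))\<^sup>2) = D\<^sup>2 + \<sigma>\<^sup>2 * (\<Sum>j<k. (g j)\<^sup>2)"
proof -
  interpret prob_space M by (rule ps)
  have e: "(\<lambda>\<omega>. (D + \<sigma> * (\<Sum>j<k. g j * \<xi> j \<omega>))\<^sup>2) =
     (\<lambda>\<omega>. D\<^sup>2 + (\<Sum>j<k. (2 * D * \<sigma> * g j) * \<xi> j \<omega>) + (\<Sum>i<k. \<Sum>j<k. (\<sigma>\<^sup>2 * g i * g j) * (\<xi> i \<omega> * \<xi> j \<omega>)))"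
  proof
    fix \<omega>
    define S where "S = (\<Sum>j<k. g j * \<xi> j \<omega>)"
    have h1: "S\<^sup>2 = (\<Sum>i<k. \<Sum>j<k. (g i * \<xi> i \<omega>) * (g j * \<xi> j \<omega>))"
      by (simp add: S_def power2_eq_square sum_product)
    have h2: "(D + \<sigma> * S)\<^sup>2 = D\<^sup>2 + (2 * D * \<sigma>) * S + \<sigma>\<^sup>2 * S\<^sup>2"
      by (simp add: power2_eq_square algebra_simps)
    have h3: "(2 * D * \<sigma>) * S = (\<Sum>j<k. (2 * D * \<sigma> * g j) * \<xi> j \<omega>)"
      by (simp add: S_def sum_distrib_left mult_ac)
    have h4: "\<sigma>\<^sup>2 * S\<^sup>2 = (\<Sum>i<k. \<Sum>j<k. (\<sigma>\<^sup>2 * g i * g j) * (\<xi> i \<omega> * \<xi> j \<omega>))"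
      unfolding h1 by (simp add: sum_distrib_left mult_ac)
    show "(D + \<sigma> * (\<Sum>j<k. g j * \<xi> j \<omega>))\<^sup>2 =
      D\<^sup>2 + (\<Sum>j<k. (2 * D * \<sigma> * g j) * \<xi> j \<omega>) + (\<Sum>i<k. \<Sum>j<k. (\<sigma>\<^sup>2 * g i * g j) * (\<xi> i \<omega> * \<xi> j \<omega>))"
      using h2 h3 h4 by (simp add: S_def)
  qed
  have i1: "integrable M (\<lambda>\<omega>. \<Sum>j<k. (2 * D * \<sigma> * g j) * \<xi> j \<omega>)"
    using I1 by (intro Bochner_Integration.integrable_sum integrable_mult_right) auto
  have i2: "integrable M (\<lambda>\<omega>. \<Sum>i<k. \<Sum>j<k. (\<sigma>\<^sup>2 * g i * g j) * (\<xi> i \<omega> * \<xi> j \<omega>))"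
    using I2 by (intro Bochner_Integration.integrable_sum integrable_mult_right) auto
  show "integrable M (\<lambda>\<omega>. (D + \<sigma> * (\<Sum>j<k. g j * \<xi> j \<omega>))\<^sup>2)"
    unfolding e using i1 i2 by (intro Bochner_Integration.integrable_add) auto
  have "integral\<^sup>L M (\<lambda>\<omega>. \<Sum>j<k. (2 * D * \<sigma> * g j) * \<xi> j \<omega>) = 0"
    using I1 E1 by (simp add: Bochner_Integration.integral_sum)
  moreover have "integral\<^sup>L M (\<lambda>\<omega>. \<Sum>i<k. \<Sum>j<k. (\<sigma>\<^sup>2 * g i * g j) * (\<xi> i \<omega> * \<xi> j \<omega>))
      = (\<Sum>i<k. \<Sum>j<k. (\<sigma>\<^sup>2 * g i * g j) * (if i = j then 1 else 0))"
    using I2 E2 by (simp add: Bochner_Integration.integral_sum Bochner_Integration.integrable_sum)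
  moreover have "(\<Sum>i<k. \<Sum>j<k. (\<sigma>\<^sup>2 * g i * g j) * (if i = j then 1 else 0)) = \<sigma>\<^sup>2 * (\<Sum>j<k. (g j)\<^sup>2)"
  proof -
    have "(\<Sum>j<k. (\<sigma>\<^sup>2 * g i * g j) * (if i = j then 1 else 0)) = \<sigma>\<^sup>2 * (g i)\<^sup>2" if "i < k" for i
    proof -
      have "(\<Sum>j<k. (\<sigma>\<^sup>2 * g i * g j) * (if i = j then 1 else 0)) = (\<Sum>j<k. if i = j then \<sigma>\<^sup>2 * g i * g j else 0)"
        by (rule sum.cong) auto
      also have "\<dots> = \<sigma>\<^sup>2 * (g i)\<^sup>2" using that by (simp add: sum.delta' power2_eq_square)
      finally show ?thesis .
    qed
    hence "(\<Sum>i<k. \<Sum>j<k. (\<sigma>\<^sup>2 * g i * g j) * (if i = j then 1 else 0)) = (\<Sum>i<k. \<sigma>\<^sup>2 * (g i)\<^sup>2)"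
      by (intro sum.cong) auto
    thus ?thesis by (simp add: sum_distrib_left)
  qed
  ultimately show "integral\<^sup>L M (\<lambda>\<omega>. (D + \<sigma> * (\<Sum>j<k. g j * \<xi> j \<omega>))\<^sup>2) = D\<^sup>2 + \<sigma>\<^sup>2 * (\<Sum>j<k. (g j)\<^sup>2)"
    unfolding e using i1 i2 by (simp add: Bochner_Integration.integral_add prob_space)
qed


fun lrec :: "real \<Rightarrow> real \<Rightarrow> real \<Rightarrow> real \<Rightarrow> nat \<Rightarrow> real" where
  "lrec a b u0 u1 0 = u0"
| "lrec a b u0 u1 (Suc 0) = u1"
| "lrec a b u0 u1 (Suc (Suc k)) = - b * lrec a b u0 u1 (Suc k) - a * lrec a b u0 u1 k"

definition ca :: "real \<Rightarrow> real \<Rightarrow> real \<Rightarrow> real \<Rightarrow> real" where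
  "ca \<alpha> \<beta> \<gamma> lam = \<beta> - \<gamma> * \<alpha> * lam"
definition cb :: "real \<Rightarrow> real \<Rightarrow> real \<Rightarrow> real \<Rightarrow> real" where
  "cb \<alpha> \<beta> \<gamma> lam = (1 + \<gamma>) * \<alpha> * lam - (1 + \<beta>)"

lemma vec_shift:
  fixes X y z xs G W :: "'v::real_vector"
  shows "X = y + \<beta> *\<^sub>R (y - z) - \<alpha> *\<^sub>R G + \<sigma> *\<^sub>R W \<Longrightarrow>
    X - xs = (y - xs) + \<beta> *\<^sub>R ((y - xs) - (z - xs)) - \<alpha> *\<^sub>R G + \<sigma> *\<^sub>R W"
  by (simp add: algebra_simps)

lemma mode_rec:
  fixes Q :: "real^'n^'n"
  assumes sym: "transpose Q = Q" and Qxs: "Q *v xs = q" and eig: "Q *v b = lam *\<^sub>R b"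
  shows "b \<bullet> (mom_iter \<alpha> \<beta> \<gamma> \<sigma> Q q w x0 x1 (Suc (Suc k)) \<omega> - xs)
    = - cb \<alpha> \<beta> \<gamma> lam * (b \<bullet> (mom_iter \<alpha> \<beta> \<gamma> \<sigma> Q q w x0 x1 (Suc k) \<omega> - xs))
      - ca \<alpha> \<beta> \<gamma> lam * (b \<bullet> (mom_iter \<alpha> \<beta> \<gamma> \<sigma> Q q w x0 x1 k \<omega> - xs)) + \<sigma> * (b \<bullet> w k \<omega>)"
proof -
  have bQ: "b \<bullet> (Q *v v) = lam * (b \<bullet> v)" for v
    using sym_dot[OF sym, of b v] eig by simp
  define y where "y = mom_iter \<alpha> \<beta> \<gamma> \<sigma> Q q w x0 x1 (Suc k) \<omega>"
  define z where "z = mom_iter \<alpha> \<beta> \<gamma> \<sigma> Q q w x0 x1 k \<omega>"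
  define Y1 where "Y1 = b \<bullet> (y - xs)"
  define Y0 where "Y0 = b \<bullet> (z - xs)"
  define G where "G = Q *v ((y - xs) + \<gamma> *\<^sub>R ((y - xs) - (z - xs)))"
  have G: "Q *v (y + \<gamma> *\<^sub>R (y - z)) - q = G"
  proof -
    have "(y - xs) + \<gamma> *\<^sub>R ((y - xs) - (z - xs)) = (y + \<gamma> *\<^sub>R (y - z)) - xs"
      by (simp add: algebra_simps)
    thus ?thesis using Qxs unfolding G_def by (simp only: matrix_vector_mult_diff_distrib)
  qed
  have "mom_iter \<alpha> \<beta> \<gamma> \<sigma> Q q w x0 x1 (Suc (Suc k)) \<omega>
      = y + \<beta> *\<^sub>R (y - z) - \<alpha> *\<^sub>R (Q *v (y + \<gamma> *\<^sub>R (y - z)) - q) + \<sigma> *\<^sub>R w k \<omega>"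
    by (simp add: y_def z_def Let_def quad_grad_def)
  hence "mom_iter \<alpha> \<beta> \<gamma> \<sigma> Q q w x0 x1 (Suc (Suc k)) \<omega>
      = y + \<beta> *\<^sub>R (y - z) - \<alpha> *\<^sub>R G + \<sigma> *\<^sub>R w k \<omega>" unfolding G .
  hence e: "mom_iter \<alpha> \<beta> \<gamma> \<sigma> Q q w x0 x1 (Suc (Suc k)) \<omega> - xs
      = (y - xs) + \<beta> *\<^sub>R ((y - xs) - (z - xs)) - \<alpha> *\<^sub>R G + \<sigma> *\<^sub>R w k \<omega>"
    by (rule vec_shift)
  have bG: "b \<bullet> G = lam * (Y1 + \<gamma> * (Y1 - Y0))"
    unfolding G_def bQ Y1_def Y0_def by (simp add: inner_add_right inner_diff_right)
  have "b \<bullet> (mom_iter \<alpha> \<beta> \<gamma> \<sigma> Q q w x0 x1 (Suc (Suc k)) \<omega> - xs)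
      = Y1 + \<beta> * (Y1 - Y0) - \<alpha> * (lam * (Y1 + \<gamma> * (Y1 - Y0))) + \<sigma> * (b \<bullet> w k \<omega>)"
    unfolding e inner_add_right inner_diff_right inner_scaleR_right bG unfolding Y1_def Y0_def by (simp del: mom_iter.simps add: inner_diff_right algebra_simps)
  thus ?thesis unfolding y_def[symmetric] z_def[symmetric] Y1_def[symmetric] Y0_def[symmetric] ca_def cb_def
    by (simp del: mom_iter.simps add: algebra_simps)
qed

lemma conv_rec:
  fixes g x :: "nat \<Rightarrow> real"
  assumes g0: "g 0 = 0" and g1: "g 1 = 1" and grec: "\<And>t. g (Suc (Suc t)) = - bb * g (Suc t) - a * g t"
  shows "(\<Sum>j<Suc (Suc k). g (Suc (Suc k) - Suc j) * x j)
      = - bb * (\<Sum>j<Suc k. g (Suc k - Suc j) * x j) - a * (\<Sum>j<k. g (k - Suc j) * x j) + x k"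
proof -
  have "(\<Sum>j<Suc (Suc k). g (Suc (Suc k) - Suc j) * x j) = (\<Sum>j<k. g (Suc k - j) * x j) + x k"
    using g0 g1 by simp
  also have "(\<Sum>j<k. g (Suc k - j) * x j) = (\<Sum>j<k. (- bb * g (k - j) - a * g (k - Suc j)) * x j)"
  proof (rule sum.cong)
    fix j assume "j \<in> {..<k}"
    hence "Suc k - j = Suc (Suc (k - Suc j))" "k - j = Suc (k - Suc j)" by auto
    thus "g (Suc k - j) * x j = (- bb * g (k - j) - a * g (k - Suc j)) * x j" using grec by simp
  qed simp
  also have "\<dots> = - bb * (\<Sum>j<k. g (k - j) * x j) - a * (\<Sum>j<k. g (k - Suc j) * x j)"
    by (simp add: sum_distrib_left sum_subtractf algebra_simps)
  also have "(\<Sum>j<k. g (k - j) * x j) = (\<Sum>j<Suc k. g (Suc k - Suc j) * x j)"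
    using g0 by simp
  finally show ?thesis .
qed

lemma mode_repr:
  fixes Q :: "real^'n^'n"
  assumes sym: "transpose Q = Q" and Qxs: "Q *v xs = q" and eig: "Q *v b = lam *\<^sub>R b"
  shows "b \<bullet> (mom_iter \<alpha> \<beta> \<gamma> \<sigma> Q q w x0 x1 k \<omega> - xs)
    = lrec (ca \<alpha> \<beta> \<gamma> lam) (cb \<alpha> \<beta> \<gamma> lam) (b \<bullet> (x0 - xs)) (b \<bullet> (x1 - xs)) k
      + \<sigma> * (\<Sum>j<k. lrec (ca \<alpha> \<beta> \<gamma> lam) (cb \<alpha> \<beta> \<gamma> lam) 0 1 (k - Suc j) * (b \<bullet> w j \<omega>))"
proof -
  define a where "a = ca \<alpha> \<beta> \<gamma> lam"
  define bb where "bb = cb \<alpha> \<beta> \<gamma> lam"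
  define Y where "Y k = b \<bullet> (mom_iter \<alpha> \<beta> \<gamma> \<sigma> Q q w x0 x1 k \<omega> - xs)" for k
  define D where "D = lrec a bb (b \<bullet> (x0 - xs)) (b \<bullet> (x1 - xs))"
  define g where "g = lrec a bb 0 1"
  define N where "N k = (\<Sum>j<k. g (k - Suc j) * (b \<bullet> w j \<omega>))" for k
  have Yrec: "Y (Suc (Suc k)) = - bb * Y (Suc k) - a * Y k + \<sigma> * (b \<bullet> w k \<omega>)" for k
    unfolding Y_def a_def bb_def by (rule mode_rec[OF sym Qxs eig])
  have Nrec: "N (Suc (Suc k)) = - bb * N (Suc k) - a * N k + b \<bullet> w k \<omega>" for k
    unfolding N_def by (rule conv_rec) (simp_all add: g_def)
  have "Y k = D k + \<sigma> * N k \<and> Y (Suc k) = D (Suc k) + \<sigma> * N (Suc k)" for k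
  proof (induction k)
    case 0
    show ?case by (simp add: Y_def D_def N_def g_def)
  next
    case (Suc k)
    hence "Y (Suc (Suc k)) = - bb * (D (Suc k) + \<sigma> * N (Suc k)) - a * (D k + \<sigma> * N k) + \<sigma> * (b \<bullet> w k \<omega>)"
      using Yrec[of k] by simp
    also have "\<dots> = D (Suc (Suc k)) + \<sigma> * N (Suc (Suc k))"
      unfolding Nrec by (simp add: D_def algebra_simps)
    finally show ?case using Suc by simp
  qed
  thus ?thesis unfolding Y_def D_def N_def g_def a_def bb_def by blast
qed

lemma mode_moment:
  fixes Q :: "real^'n^'n" and w :: "nat \<Rightarrow> 'a \<Rightarrow> real^'n"
  assumes sym: "transpose Q = Q" and Qxs: "Q *v xs = q" and eig: "Q *v b = lam *\<^sub>R b"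
    and b1: "norm b = 1" and wn: "white_noise M w"
  shows "integrable M (\<lambda>\<omega>. (b \<bullet> (mom_iter \<alpha> \<beta> \<gamma> \<sigma> Q q w x0 x1 k \<omega> - xs))\<^sup>2)"
    and "integral\<^sup>L M (\<lambda>\<omega>. (b \<bullet> (mom_iter \<alpha> \<beta> \<gamma> \<sigma> Q q w x0 x1 k \<omega> - xs))\<^sup>2)
      = (lrec (ca \<alpha> \<beta> \<gamma> lam) (cb \<alpha> \<beta> \<gamma> lam) (b \<bullet> (x0 - xs)) (b \<bullet> (x1 - xs)) k)\<^sup>2
        + \<sigma>\<^sup>2 * (\<Sum>t<k. (lrec (ca \<alpha> \<beta> \<gamma> lam) (cb \<alpha> \<beta> \<gamma> lam) 0 1 t)\<^sup>2)"
proof -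
  have ps: "prob_space M" using wn by (simp add: white_noise_def)
  note ws = wn_scalar[OF wn b1]
  note sm = second_moment[OF ps, of "\<lambda>j \<omega>. b \<bullet> w j \<omega>", OF ws(1) ws(2) ws(3) ws(4)]
  show "integrable M (\<lambda>\<omega>. (b \<bullet> (mom_iter \<alpha> \<beta> \<gamma> \<sigma> Q q w x0 x1 k \<omega> - xs))\<^sup>2)"
    unfolding mode_repr[OF sym Qxs eig] by (rule sm(1))
  have "integral\<^sup>L M (\<lambda>\<omega>. (b \<bullet> (mom_iter \<alpha> \<beta> \<gamma> \<sigma> Q q w x0 x1 k \<omega> - xs))\<^sup>2)
      = (lrec (ca \<alpha> \<beta> \<gamma> lam) (cb \<alpha> \<beta> \<gamma> lam) (b \<bullet> (x0 - xs)) (b \<bullet> (x1 - xs)) k)\<^sup>2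
        + \<sigma>\<^sup>2 * (\<Sum>j<k. (lrec (ca \<alpha> \<beta> \<gamma> lam) (cb \<alpha> \<beta> \<gamma> lam) 0 1 (k - Suc j))\<^sup>2)"
    unfolding mode_repr[OF sym Qxs eig] by (rule sm(2))
  also have "(\<Sum>j<k. (lrec (ca \<alpha> \<beta> \<gamma> lam) (cb \<alpha> \<beta> \<gamma> lam) 0 1 (k - Suc j))\<^sup>2)
      = (\<Sum>t<k. (lrec (ca \<alpha> \<beta> \<gamma> lam) (cb \<alpha> \<beta> \<gamma> lam) 0 1 t)\<^sup>2)"
    by (rule sum.nat_diff_reindex)
  finally show "integral\<^sup>L M (\<lambda>\<omega>. (b \<bullet> (mom_iter \<alpha> \<beta> \<gamma> \<sigma> Q q w x0 x1 k \<omega> - xs))\<^sup>2)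
      = (lrec (ca \<alpha> \<beta> \<gamma> lam) (cb \<alpha> \<beta> \<gamma> lam) (b \<bullet> (x0 - xs)) (b \<bullet> (x1 - xs)) k)\<^sup>2
        + \<sigma>\<^sup>2 * (\<Sum>t<k. (lrec (ca \<alpha> \<beta> \<gamma> lam) (cb \<alpha> \<beta> \<gamma> lam) 0 1 t)\<^sup>2)" .
qed

definition stab :: "real \<Rightarrow> real \<Rightarrow> bool" where
  "stab a b \<longleftrightarrow> 1 + a > 0 \<and> 1 - a > 0 \<and> 1 + a + b > 0 \<and> 1 + a - b > 0"

lemma lrec_lim:
  assumes "stab a bb"
  shows "(\<lambda>k. (lrec a bb u0 u1 k)\<^sup>2 + \<sigma>\<^sup>2 * (\<Sum>t<k. (lrec a bb 0 1 t)\<^sup>2)) \<longlonglongrightarrow> 0 + \<sigma>\<^sup>2 * P22 a bb"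
proof -
  have st: "1 + a > 0" "1 - a > 0" "1 + a + bb > 0" "1 + a - bb > 0" using assms by (auto simp: stab_def)
  have r1: "(\<lambda>k. (lrec a bb u0 u1 k)\<^sup>2) \<longlonglongrightarrow> 0"
    by (rule rec_tendsto0[OF st]) simp
  have "(\<lambda>k. (lrec a bb 0 1 k)\<^sup>2) sums LV a bb (lrec a bb 0 1 0) (lrec a bb 0 1 1)"
    by (rule rec_sums[OF st]) simp
  hence "(\<lambda>k. (lrec a bb 0 1 k)\<^sup>2) sums P22 a bb" by (simp add: LV_def)
  hence r2: "(\<lambda>k. \<Sum>t<k. (lrec a bb 0 1 t)\<^sup>2) \<longlonglongrightarrow> P22 a bb" by (simp add: sums_def)
  show ?thesis by (intro tendsto_intros r1 r2)
qed

lemma cesaro: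
  fixes a :: "nat \<Rightarrow> real"
  assumes "a \<longlonglongrightarrow> L"
  shows "(\<lambda>t. (1 / real t) * (\<Sum>k\<le>t. a k)) \<longlonglongrightarrow> L"
proof -
  define b where "b k = a k - L" for k
  have b0: "b \<longlonglongrightarrow> 0" using assms unfolding b_def by (simp add: LIM_zero)
  have A: "(\<lambda>t. (1 / real t) * (\<Sum>k\<le>t. b k)) \<longlonglongrightarrow> 0"
  proof (rule LIMSEQ_I)
    fix r :: real assume r: "r > 0"
    obtain N where N: "\<And>k. k \<ge> N \<Longrightarrow> \<bar>b k\<bar> < r / 4"
      using LIMSEQ_D[OF b0, of "r / 4"] r by auto
    define C where "C = (\<Sum>k<N. \<bar>b k\<bar>)"
    have C0: "C \<ge> 0" by (simp add: C_def sum_nonneg)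
    obtain T :: nat where T: "real T > 2 * C / r + 1" using reals_Archimedean2 by blast
    show "\<exists>no. \<forall>t\<ge>no. norm ((1 / real t) * (\<Sum>k\<le>t. b k) - 0) < r"
    proof (intro exI allI impI)
      fix t assume t: "t \<ge> max N T"
      have tpos: "real t > 0" using T t C0 r
        by (smt (verit, best) divide_nonneg_pos max.bounded_iff of_nat_le_iff of_nat_0_le_iff)
      have "\<bar>\<Sum>k\<le>t. b k\<bar> \<le> (\<Sum>k\<le>t. \<bar>b k\<bar>)" by (rule sum_abs)
      also have "(\<Sum>k\<le>t. \<bar>b k\<bar>) = C + (\<Sum>k\<in>{N..t}. \<bar>b k\<bar>)"
      proof -
        have "{..t} = {..<N} \<union> {N..t}" using t by auto
        moreover have "{..<N} \<inter> {N..t} = {}" by auto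
        ultimately show ?thesis unfolding C_def by (simp add: sum.union_disjoint)
      qed
      also have "(\<Sum>k\<in>{N..t}. \<bar>b k\<bar>) \<le> (\<Sum>k\<in>{N..t}. r / 4)"
        by (rule sum_mono) (use N in \<open>force simp: less_imp_le\<close>)
      also have "(\<Sum>k\<in>{N..t}. r / 4) \<le> (real t + 1) * (r / 4)"
        using r by (simp add: mult_right_mono)
      finally have S: "\<bar>\<Sum>k\<le>t. b k\<bar> \<le> C + (real t + 1) * (r / 4)" by simp
      have "norm ((1 / real t) * (\<Sum>k\<le>t. b k) - 0) = \<bar>\<Sum>k\<le>t. b k\<bar> / real t"
        using tpos by (simp add: abs_mult)
      also have "\<dots> \<le> (C + (real t + 1) * (r / 4)) / real t"
        using S tpos by (simp add: divide_right_mono)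
      also have "\<dots> = C / real t + (r / 4) * (1 + 1 / real t)"
        using tpos by (simp add: field_simps)
      also have "C / real t < r / 2"
      proof -
        have "real t > 2 * C / r" using T t by simp
        hence "2 * C < real t * r" using r by (simp add: field_simps)
        thus ?thesis using tpos by (simp add: field_simps)
      qed
      also have "1 / real t \<le> 1"
      proof -
        have "t \<ge> 1" using tpos by simp
        hence "real t \<ge> 1" by simp
        thus ?thesis by simp
      qed
      hence "(r / 4) * (1 + 1 / real t) \<le> r / 2"
      proof -
        assume h: "1 / real t \<le> 1"
        have "(r / 4) * (1 / real t) \<le> (r / 4) * 1" using r h by (intro mult_left_mono) auto
        moreover have "(r / 4) * (1 + 1 / real t) = r / 4 + (r / 4) * (1 / real t)" by (simp only: distrib_left mult_1_right)
        ultimately show ?thesis by linarith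
      qed
      finally show "norm ((1 / real t) * (\<Sum>k\<le>t. b k) - 0) < r" by simp
    qed
  qed
  have B: "(\<lambda>t. (1 / real t) * (\<Sum>k\<le>t. a k)) = (\<lambda>t. (1 / real t) * (\<Sum>k\<le>t. b k) + L * ((real t + 1) / real t))"
    by (rule ext) (simp add: b_def sum_subtractf field_simps add_divide_distrib[symmetric])
  have C: "(\<lambda>t. (real t + 1) / real t) \<longlonglongrightarrow> 1"
  proof -
    have l: "(\<lambda>t. 1 + 1 / real t) \<longlonglongrightarrow> 1" using tendsto_add[OF tendsto_const lim_1_over_n, of "1::real"] by simp
    have ev: "eventually (\<lambda>t. 1 + 1 / real t = (real t + 1) / real t) sequentially"
      using eventually_gt_at_top[of 0] by eventually_elim (simp add: field_simps)
    show ?thesis by (rule Lim_transform_eventually[OF l ev])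
  qed
  show ?thesis unfolding B using tendsto_add[OF A tendsto_mult[OF tendsto_const C, of L]] by simp
qed


lemma Jhat_P22: "Jhat \<alpha> \<beta> \<gamma> \<sigma> lam = \<sigma>\<^sup>2 * P22 (ca \<alpha> \<beta> \<gamma> lam) (cb \<alpha> \<beta> \<gamma> lam)"
proof -
  define a where "a = ca \<alpha> \<beta> \<gamma> lam"
  define b where "b = cb \<alpha> \<beta> \<gamma> lam"
  define X where "X = (a + b + 1) * (1 - a) * (a - b + 1)"
  have "Jhat \<alpha> \<beta> \<gamma> \<sigma> lam = \<sigma>\<^sup>2 * ((a + b + 1) + (a - b + 1)) / (2 * X)"
    unfolding Jhat_def Let_def a_def b_def ca_def cb_def X_def by (simp add: mult.assoc)
  also have "\<dots> = \<sigma>\<^sup>2 * ((1 + a) / X)" by (cases "X = 0") (simp_all add: field_simps)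
  also have "(1 + a) / X = P22 a b" unfolding P22_def X_def by (simp add: algebra_simps)
  finally show ?thesis by (simp add: a_def b_def)
qed

lemma xstar_eq:
  fixes Q :: "real^'n^'n"
  assumes sym: "transpose Q = Q" and pd: "\<forall>x. x \<noteq> 0 \<longrightarrow> x \<bullet> (Q *v x) > 0"
  shows "Q *v quad_xstar Q q = q"
proof -
  have "inj ((*v) Q)"
  proof (rule injI)
    fix x y assume "Q *v x = Q *v y"
    hence "Q *v (x - y) = 0" by (simp add: matrix_vector_mult_diff_distrib)
    hence "(x - y) \<bullet> (Q *v (x - y)) = 0" by simp
    thus "x = y" using pd[rule_format, of "x - y"] by (cases "x - y = 0") auto
  qed
  hence "surj ((*v) Q)" by (rule linear_inj_imp_surj[OF matrix_vector_mul_linear])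
  then obtain z where z: "Q *v z = q" by (metis surjD)
  have diff: "quad_fun Q q y - quad_fun Q q z = (1/2) * ((y - z) \<bullet> (Q *v (y - z)))" for y
  proof -
    have s: "z \<bullet> (Q *v y) = y \<bullet> (Q *v z)" using sym_dot[OF sym, of z y] inner_commute[of y "Q *v z"] by simp
    show ?thesis unfolding quad_fun_def z[symmetric]
      by (simp add: matrix_vector_mult_diff_distrib inner_diff_left inner_diff_right s inner_commute[of z "Q *v z"] inner_commute[of y "Q *v z"] algebra_simps)
  qed
  have zmin: "\<forall>y. quad_fun Q q z \<le> quad_fun Q q y"
  proof
    fix y show "quad_fun Q q z \<le> quad_fun Q q y"
      using diff[of y] pd[rule_format, of "y - z"] by (cases "y = z") auto
  qed
  hence "\<forall>y. quad_fun Q q (quad_xstar Q q) \<le> quad_fun Q q y"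
    unfolding quad_xstar_def by (rule someI)
  hence "quad_fun Q q (quad_xstar Q q) \<le> quad_fun Q q z" by blast
  hence "quad_xstar Q q = z"
    using diff[of "quad_xstar Q q"] pd[rule_format, of "quad_xstar Q q - z"] by (cases "quad_xstar Q q = z") auto
  thus ?thesis using z by simp
qed

theorem noise_limit:
  fixes Q :: "real^'n^'n" and w :: "nat \<Rightarrow> 'a \<Rightarrow> real^'n"
  assumes sym: "transpose Q = Q" and pd: "\<forall>x. x \<noteq> 0 \<longrightarrow> x \<bullet> (Q *v x) > 0"
    and wn: "white_noise M w" and eb: "eigbasis Q B" and sp: "span B = UNIV"
    and st: "\<forall>b\<in>B. stab (ca \<alpha> \<beta> \<gamma> (b \<bullet> (Q *v b))) (cb \<alpha> \<beta> \<gamma> (b \<bullet> (Q *v b)))"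
  shows "noise_avg M \<alpha> \<beta> \<gamma> \<sigma> Q q w x0 x1 \<longlonglongrightarrow> (\<Sum>b\<in>B. Jhat \<alpha> \<beta> \<gamma> \<sigma> (b \<bullet> (Q *v b)))"
proof -
  define xs where "xs = quad_xstar Q q"
  have Qxs: "Q *v xs = q" unfolding xs_def by (rule xstar_eq[OF sym pd])
  have fin: "finite B" by (rule eigbasis_finite[OF eb])
  have eigb: "Q *v b = (b \<bullet> (Q *v b)) *\<^sub>R b" "norm b = 1" if "b \<in> B" for b
    using eb that by (auto simp: eigbasis_def)
  define lamb where "lamb b = b \<bullet> (Q *v b)" for b
  define E where "E k = integral\<^sup>L M (\<lambda>\<omega>. (norm (mom_iter \<alpha> \<beta> \<gamma> \<sigma> Q q w x0 x1 k \<omega> - xs))\<^sup>2)" for k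
  have Ek: "E k = (\<Sum>b\<in>B. (lrec (ca \<alpha> \<beta> \<gamma> (lamb b)) (cb \<alpha> \<beta> \<gamma> (lamb b)) (b \<bullet> (x0 - xs)) (b \<bullet> (x1 - xs)) k)\<^sup>2
        + \<sigma>\<^sup>2 * (\<Sum>t<k. (lrec (ca \<alpha> \<beta> \<gamma> (lamb b)) (cb \<alpha> \<beta> \<gamma> (lamb b)) 0 1 t)\<^sup>2))" for k
  proof -
    have "E k = integral\<^sup>L M (\<lambda>\<omega>. \<Sum>b\<in>B. (b \<bullet> (mom_iter \<alpha> \<beta> \<gamma> \<sigma> Q q w x0 x1 k \<omega> - xs))\<^sup>2)"
      unfolding E_def by (simp only: eigbasis_parseval[OF eb sp])
    also have "\<dots> = (\<Sum>b\<in>B. integral\<^sup>L M (\<lambda>\<omega>. (b \<bullet> (mom_iter \<alpha> \<beta> \<gamma> \<sigma> Q q w x0 x1 k \<omega> - xs))\<^sup>2))"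
      by (rule Bochner_Integration.integral_sum) (rule mode_moment(1)[OF sym Qxs eigb(1) eigb(2) wn])
    also have "\<dots> = (\<Sum>b\<in>B. (lrec (ca \<alpha> \<beta> \<gamma> (lamb b)) (cb \<alpha> \<beta> \<gamma> (lamb b)) (b \<bullet> (x0 - xs)) (b \<bullet> (x1 - xs)) k)\<^sup>2
        + \<sigma>\<^sup>2 * (\<Sum>t<k. (lrec (ca \<alpha> \<beta> \<gamma> (lamb b)) (cb \<alpha> \<beta> \<gamma> (lamb b)) 0 1 t)\<^sup>2))"
      by (rule sum.cong[OF refl]) (unfold lamb_def, rule mode_moment(2)[OF sym Qxs eigb(1) eigb(2) wn])
    finally show ?thesis .
  qed
  have lim: "E \<longlonglongrightarrow> (\<Sum>b\<in>B. 0 + \<sigma>\<^sup>2 * P22 (ca \<alpha> \<beta> \<gamma> (lamb b)) (cb \<alpha> \<beta> \<gamma> (lamb b)))"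
    unfolding Ek
    by (rule tendsto_sum, rule lrec_lim) (use st in \<open>auto simp: lamb_def\<close>)
  have "noise_avg M \<alpha> \<beta> \<gamma> \<sigma> Q q w x0 x1 = (\<lambda>t. (1 / real t) * (\<Sum>k\<le>t. E k))"
    unfolding noise_avg_def E_def xs_def by (rule ext) simp
  moreover have "(\<lambda>t. (1 / real t) * (\<Sum>k\<le>t. E k)) \<longlonglongrightarrow> (\<Sum>b\<in>B. 0 + \<sigma>\<^sup>2 * P22 (ca \<alpha> \<beta> \<gamma> (lamb b)) (cb \<alpha> \<beta> \<gamma> (lamb b)))"
    by (rule cesaro[OF lim])
  ultimately show ?thesis by (simp add: Jhat_P22 lamb_def)
qed


definition NN :: "real \<Rightarrow> real \<Rightarrow> real" where
  "NN p u = (1 + u) * ((1 - p) + p * u) * ((1 - p) - (1 + p) * u)"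
definition DD :: "real \<Rightarrow> real \<Rightarrow> real" where
  "DD p u = (1 - p) * ((1 - p) - p * u)"
definition RR :: "real \<Rightarrow> real \<Rightarrow> real \<Rightarrow> real" where
  "RR p u v = ((- (1 - p) * p) + ((1 - p) * p - 1 - p) * (u + v) + (- p * (1 + p)) * (u * u + u * v + v * v)) * DD p v
     + (1 - p) * p * NN p v"

lemma I1: "NN p u * DD p v - NN p v * DD p u = (u - v) * RR p u v"
  unfolding NN_def DD_def RR_def by (simp add: algebra_simps)

lemma I2: "(w - v) * RR p u v = (w - u) * RR p v v + (u - v) * RR p w v + (w - v) * (p * (1 + p) * DD p v) * (u - v) * (w - u)"
  unfolding NN_def DD_def RR_def by (simp add: algebra_simps)

lemma I4:
  assumes hv: "v * (1 - c) = - r * (1 - c * r)"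
  shows "RR (c * r) v v * (1 - c) ^ 3
    = 2 * r * (1 - c * r) ^ 3 * ((1 - c)\<^sup>2 - (c * r\<^sup>2) * (1 - c) * (1 - c + c\<^sup>2) - (c * r\<^sup>2)\<^sup>2 * (1 - 2 * c + 2 * c\<^sup>2) + c * (c * r\<^sup>2) ^ 3)"
  using hv unfolding NN_def DD_def RR_def by algebra

lemma Qpp_nonneg:
  fixes c X :: real
  assumes c0: "0 \<le> c" and c2: "c \<le> 1/2" and X0: "0 \<le> X" and Xc: "X \<le> c"
  shows "(1 - c)\<^sup>2 - X * (1 - c) * (1 - c + c\<^sup>2) - X\<^sup>2 * (1 - 2 * c + 2 * c\<^sup>2) + c * X ^ 3 \<ge> 0"
proof -
  have id: "(1 - c)\<^sup>2 - X * (1 - c) * (1 - c + c\<^sup>2) - X\<^sup>2 * (1 - 2 * c + 2 * c\<^sup>2) + c * X ^ 3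
     = (1 - c) * (1 - 2 * c) + (c - X) * ((1 - 2 * c) * (1 + 2 * c\<^sup>2) + (1 - 2 * c + 2 * c\<^sup>2) * (X + c)
        + c * ((c\<^sup>2 - X\<^sup>2) + c * (c - X)))"
    by algebra
  have a1: "(1 - c) * (1 - 2 * c) \<ge> 0" using c2 by simp
  have q: "1 - 2 * c + 2 * c\<^sup>2 \<ge> 0"
  proof -
    have "0 \<le> (1 - c)\<^sup>2 + c\<^sup>2" by simp
    moreover have "(1 - c)\<^sup>2 + c\<^sup>2 = 1 - 2 * c + 2 * c\<^sup>2" by (simp add: power2_eq_square algebra_simps)
    ultimately show ?thesis by linarith
  qed
  have sq: "c\<^sup>2 - X\<^sup>2 \<ge> 0" using X0 Xc power_mono[of X c 2] by simp
  have t: "(1 - 2 * c) * (1 + 2 * c\<^sup>2) + (1 - 2 * c + 2 * c\<^sup>2) * (X + c) + c * ((c\<^sup>2 - X\<^sup>2) + c * (c - X)) \<ge> 0"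
    using c0 c2 X0 Xc q sq by (intro add_nonneg_nonneg mult_nonneg_nonneg) auto
  have "(c - X) * ((1 - 2 * c) * (1 + 2 * c\<^sup>2) + (1 - 2 * c + 2 * c\<^sup>2) * (X + c) + c * ((c\<^sup>2 - X\<^sup>2) + c * (c - X))) \<ge> 0"
    using t Xc by (intro mult_nonneg_nonneg) auto
  thus ?thesis unfolding id using a1 by linarith
qed

lemma Rvv_nonneg:
  assumes c0: "0 \<le> c" and c2: "c \<le> 1/2" and r0: "0 < r" and r1: "r < 1"
    and hv: "v * (1 - c) = - r * (1 - c * r)"
  shows "RR (c * r) v v \<ge> 0"
proof -
  have X: "0 \<le> c * r\<^sup>2" "c * r\<^sup>2 \<le> c"
    using c0 r0 r1 by (auto simp: mult_left_le power_le_one)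
  have "c * r \<le> c * 1" using c0 r1 by (intro mult_left_mono) auto
  hence k: "1 - c * r > 0" using c2 by simp
  have "2 * r * (1 - c * r) ^ 3 * ((1 - c)\<^sup>2 - (c * r\<^sup>2) * (1 - c) * (1 - c + c\<^sup>2) - (c * r\<^sup>2)\<^sup>2 * (1 - 2 * c + 2 * c\<^sup>2) + c * (c * r\<^sup>2) ^ 3) \<ge> 0"
    using Qpp_nonneg[OF c0 c2 X] r0 k by simp
  hence "RR (c * r) v v * (1 - c) ^ 3 \<ge> 0" using I4[OF hv] by simp
  moreover have "(1 - c) ^ 3 > 0" using c2 by simp
  ultimately show ?thesis by (simp add: zero_le_mult_iff)
qed



lemma closed_m:
  assumes hv: "v * (1 - c) = - r * (1 - c * r)"
  shows "NN (c * r) v * (1 - c) ^ 3 = (1 - c * r)\<^sup>2 * (1 - r) * (1 + r) * (1 - c - c * r) * (1 - c - c * r\<^sup>2) * (1 - c + c * r)"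
    and "DD (c * r) v * (1 - c) = (1 - c * r)\<^sup>2 * (1 - c + c * r\<^sup>2)"
  using hv unfolding NN_def DD_def by algebra+

lemma closed_L:
  assumes hw: "w * (1 + c) = r * (1 - c * r)"
  shows "NN (c * r) w * (1 + c) ^ 3 = (1 - c * r)\<^sup>2 * (1 + r) * (1 - r) * (1 + c - c * r) * (1 + c + c * r\<^sup>2) * (1 + c + c * r)"
    and "DD (c * r) w * (1 + c) = (1 - c * r)\<^sup>2 * (1 + c - c * r\<^sup>2)"
  using hw unfolding NN_def DD_def by algebra+

lemma basic_pos:
  fixes c r :: real
  assumes c0: "0 \<le> c" and c2: "c \<le> 1/2" and r0: "0 < r" and r1: "r < 1"
  shows "1 - c * r > 0" "1 - c - c * r > 0" "1 - c - c * r\<^sup>2 > 0" "1 - c + c * r > 0" "1 + c - c * r > 0"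
    "1 + c + c * r > 0" "1 + c - c * r\<^sup>2 > 0" "1 + c + c * r\<^sup>2 > 0" "1 - c + c * r\<^sup>2 > 0"
    "c * r \<ge> 0" "c * r\<^sup>2 \<le> c * r" "c * r \<le> c"
proof -
  have cr: "c * r \<le> c" using c0 r1 mult_left_mono[of r 1 c] by simp
  have cr0: "c * r \<ge> 0" using c0 r0 by simp
  have crr: "c * r\<^sup>2 \<le> c * r" using cr0 r1 r0 mult_left_mono[of r 1 "c * r"] by (simp add: power2_eq_square mult.assoc)
  have crr0: "c * r\<^sup>2 \<ge> 0" using c0 by simp
  have cr2: "c * r \<le> r / 2" using c2 r0 mult_right_mono[of c "1/2" r] by simp
  show "1 - c * r > 0" "1 - c - c * r > 0" "1 - c - c * r\<^sup>2 > 0" "1 - c + c * r > 0" "1 + c - c * r > 0"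
    "1 + c + c * r > 0" "1 + c - c * r\<^sup>2 > 0" "1 + c + c * r\<^sup>2 > 0" "1 - c + c * r\<^sup>2 > 0"
    "c * r \<ge> 0" "c * r\<^sup>2 \<le> c * r" "c * r \<le> c"
    using cr cr0 crr crr0 c0 c2 cr2 r1 r0 by linarith+
qed

lemma G_ineq:
  fixes c r v w :: real
  assumes c0: "0 \<le> c" and c2: "c \<le> 1/2" and r0: "0 < r" and r1: "r < 1"
    and hv: "v * (1 - c) = - r * (1 - c * r)" and hw: "w * (1 + c) = r * (1 - c * r)"
  shows "NN (c * r) w * DD (c * r) v - NN (c * r) v * DD (c * r) w \<ge> 0"
proof -
  note bp = basic_pos[OF c0 c2 r0 r1]
  define k where "k = 1 - c * r"
  define AL where "AL = (1 + c - c * r) * (1 + c + c * r)"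
  define Am where "Am = (1 - c - c * r) * (1 - c + c * r)"
  define BL where "BL = (1 + c + c * r\<^sup>2) * (1 - c + c * r\<^sup>2)"
  define Bm where "Bm = (1 - c - c * r\<^sup>2) * (1 + c - c * r\<^sup>2)"
  have e1: "AL * (1 - c)\<^sup>2 - Am * (1 + c)\<^sup>2 = 4 * c ^ 3 * r\<^sup>2" unfolding AL_def Am_def by algebra
  have e2: "BL - Bm = 4 * c * r\<^sup>2" unfolding BL_def Bm_def by algebra
  have Am0: "Am * (1 + c)\<^sup>2 \<ge> 0" using bp unfolding Am_def by simp
  have Bm0: "Bm \<ge> 0" using bp unfolding Bm_def by simp
  have "4 * c ^ 3 * r\<^sup>2 \<ge> 0" using c0 by simp
  hence A: "AL * (1 - c)\<^sup>2 \<ge> Am * (1 + c)\<^sup>2" using e1 by linarith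
  have "4 * c * r\<^sup>2 \<ge> 0" using c0 by simp
  hence B: "BL \<ge> Bm" using e2 by linarith
  have "0 \<le> AL * (1 - c)\<^sup>2" using A Am0 by linarith
  have AB: "(AL * (1 - c)\<^sup>2) * BL \<ge> (Am * (1 + c)\<^sup>2) * Bm"
    by (rule mult_mono[OF A B \<open>0 \<le> AL * (1 - c)\<^sup>2\<close> Bm0])
  have key: "(NN (c * r) w * DD (c * r) v - NN (c * r) v * DD (c * r) w) * ((1 + c) ^ 4 * (1 - c) ^ 4)
     = k ^ 4 * (1 - r\<^sup>2) * (1 + c) * (1 - c) * ((AL * (1 - c)\<^sup>2) * BL - (Am * (1 + c)\<^sup>2) * Bm)"
  proof -
    have "(NN (c * r) w * DD (c * r) v - NN (c * r) v * DD (c * r) w) * ((1 + c) ^ 4 * (1 - c) ^ 4)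
      = (NN (c * r) w * (1 + c) ^ 3) * (DD (c * r) v * (1 - c)) * ((1 + c) * (1 - c) ^ 3)
        - (NN (c * r) v * (1 - c) ^ 3) * (DD (c * r) w * (1 + c)) * ((1 - c) * (1 + c) ^ 3)"
      by algebra
    also have "\<dots> = k ^ 4 * (1 - r\<^sup>2) * (1 + c) * (1 - c) * ((AL * (1 - c)\<^sup>2) * BL - (Am * (1 + c)\<^sup>2) * Bm)"
      unfolding closed_m[OF hv] closed_L[OF hw] k_def AL_def Am_def BL_def Bm_def by algebra
    finally show ?thesis .
  qed
  have "k ^ 4 * (1 - r\<^sup>2) * (1 + c) * (1 - c) * ((AL * (1 - c)\<^sup>2) * BL - (Am * (1 + c)\<^sup>2) * Bm) \<ge> 0"
  proof -
    have "1 - r\<^sup>2 > 0" using r0 r1 by (simp add: power_less_one_iff abs_less_iff power2_less_eq_zero_iff less_1_mult)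
    moreover have "k > 0" using bp by (simp add: k_def)
    ultimately show ?thesis using AB c2 c0 by (intro mult_nonneg_nonneg) auto
  qed
  hence "(NN (c * r) w * DD (c * r) v - NN (c * r) v * DD (c * r) w) * ((1 + c) ^ 4 * (1 - c) ^ 4) \<ge> 0"
    using key by simp
  moreover have "(1 + c) ^ 4 * (1 - c) ^ 4 > 0" using c0 c2 by simp
  ultimately show ?thesis by (simp add: zero_le_mult_iff)
qed

lemma pos_of_mult: "x * y > 0 \<Longrightarrow> y > 0 \<Longrightarrow> x > (0::real)"
  by (metis zero_less_mult_pos2 mult.commute)

lemma range_pos:
  fixes c r v w u :: real
  assumes c0: "0 \<le> c" and c2: "c \<le> 1/2" and r0: "0 < r" and r1: "r < 1"
    and hv: "v * (1 - c) = - r * (1 - c * r)" and hw: "w * (1 + c) = r * (1 - c * r)"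
    and uv: "v \<le> u" and uw: "u \<le> w"
  shows "1 + u > 0" "(1 - c * r) + c * r * u > 0" "(1 - c * r) - (1 + c * r) * u > 0" "(1 - c * r) - c * r * u > 0"
    "NN (c * r) u > 0" "DD (c * r) u > 0"
proof -
  note bp = basic_pos[OF c0 c2 r0 r1]
  have c1: "1 - c > 0" "1 + c > 0" using c0 c2 by auto
  have "(1 + v) * (1 - c) = (1 - r) * (1 - c - c * r)" using hv by algebra
  moreover have "(1 - r) * (1 - c - c * r) > 0" using bp r1 by simp
  ultimately have "1 + v > 0" using c1 pos_of_mult[of "1 + v" "1 - c"] by simp
  thus A: "1 + u > 0" using uv by simp
  have "((1 - c * r) + c * r * v) * (1 - c) = (1 - c * r) * (1 - c - c * r\<^sup>2)" using hv by algebra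
  moreover have "(1 - c * r) * (1 - c - c * r\<^sup>2) > 0" using bp by simp
  ultimately have "(1 - c * r) + c * r * v > 0" using c1 pos_of_mult[of "(1 - c * r) + c * r * v" "1 - c"] by simp
  moreover have "c * r * v \<le> c * r * u" using uv bp by (intro mult_left_mono) auto
  ultimately show B: "(1 - c * r) + c * r * u > 0" by simp
  have "((1 - c * r) - (1 + c * r) * w) * (1 + c) = (1 - c * r) * (1 - r) * (1 + c + c * r)" using hw by algebra
  moreover have "(1 - c * r) * (1 - r) * (1 + c + c * r) > 0" using bp r1 by simp
  ultimately have "(1 - c * r) - (1 + c * r) * w > 0" using c1 pos_of_mult[of "(1 - c * r) - (1 + c * r) * w" "1 + c"] by simp
  moreover have "(1 + c * r) * u \<le> (1 + c * r) * w" using uw bp by (intro mult_left_mono) auto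
  ultimately show C: "(1 - c * r) - (1 + c * r) * u > 0" by simp
  have "((1 - c * r) - c * r * w) * (1 + c) = (1 - c * r) * (1 + c - c * r\<^sup>2)" using hw by algebra
  moreover have "(1 - c * r) * (1 + c - c * r\<^sup>2) > 0" using bp by simp
  ultimately have "(1 - c * r) - c * r * w > 0" using c1 pos_of_mult[of "(1 - c * r) - c * r * w" "1 + c"] by simp
  moreover have "c * r * u \<le> c * r * w" using uw bp by (intro mult_left_mono) auto
  ultimately show D: "(1 - c * r) - c * r * u > 0" by simp
  show "NN (c * r) u > 0" unfolding NN_def using A B C by simp
  show "DD (c * r) u > 0" unfolding DD_def using D bp by simp
qed

lemma K2:
  fixes c r v w u :: real
  assumes c0: "0 \<le> c" and c2: "c \<le> 1/2" and r0: "0 < r" and r1: "r < 1"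
    and hv: "v * (1 - c) = - r * (1 - c * r)" and hw: "w * (1 + c) = r * (1 - c * r)"
    and uv: "v \<le> u" and uw: "u \<le> w"
  shows "DD (c * r) u / NN (c * r) u \<le> DD (c * r) v / NN (c * r) v"
proof -
  note bp = basic_pos[OF c0 c2 r0 r1]
  have vw: "v < w"
  proof -
    have "v * (1 - c) < 0" using hv bp r0 by (simp add: mult_pos_pos)
    hence "v < 0" using c2 by (simp add: mult_less_0_iff)
    moreover have "w * (1 + c) > 0" using hw bp r0 by simp
    hence "w > 0" using c0 by (simp add: zero_less_mult_iff)
    ultimately show ?thesis by simp
  qed
  define p where "p = c * r"
  have p0: "p \<ge> 0" using bp by (simp add: p_def)
  have Rvv: "RR p v v \<ge> 0" unfolding p_def by (rule Rvv_nonneg[OF c0 c2 r0 r1 hv])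
  have "(w - v) * RR p w v \<ge> 0"
    using G_ineq[OF c0 c2 r0 r1 hv hw] I1[of p w v] by (simp add: p_def)
  hence Rwv: "RR p w v \<ge> 0" using vw by (simp add: zero_le_mult_iff)
  have Dv: "DD p v > 0" unfolding p_def by (rule range_pos(6)[OF c0 c2 r0 r1 hv hw order_refl]) (use vw in simp)
  have "(w - u) * RR p v v + (u - v) * RR p w v + (w - v) * (p * (1 + p) * DD p v) * (u - v) * (w - u) \<ge> 0"
    using Rvv Rwv Dv p0 uv uw vw by (intro add_nonneg_nonneg mult_nonneg_nonneg) auto
  hence "(w - v) * RR p u v \<ge> 0" using I2[of w v p u] by simp
  hence Ruv: "RR p u v \<ge> 0" using vw by (simp add: zero_le_mult_iff)
  hence "NN p u * DD p v - NN p v * DD p u \<ge> 0" using I1[of p u v] uv by simp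
  moreover have "NN p u > 0" "NN p v > 0" "DD p u > 0"
    unfolding p_def using range_pos[OF c0 c2 r0 r1 hv hw] uv uw vw by auto
  ultimately show ?thesis unfolding p_def[symmetric] by (simp add: divide_simps) (simp add: mult.commute)
qed


lemma P22_ge1:
  assumes "stab a b" shows "P22 a b \<ge> 1"
proof -
  have st: "1 + a > 0" "1 - a > 0" "1 + a + b > 0" "1 + a - b > 0" using assms by (auto simp: stab_def)
  have X: "(1 - a) * (1 + a + b) * (1 + a - b) > 0" using st by simp
  have "(1 - a) * (1 + a + b) * (1 + a - b) = (1 - a) * ((1 + a)\<^sup>2 - b\<^sup>2)" by (simp add: algebra_simps power2_eq_square)
  also have "\<dots> \<le> (1 - a) * (1 + a)\<^sup>2" using st by (intro mult_left_mono) auto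
  also have "\<dots> = (1 + a) * (1 - a\<^sup>2)" by (simp add: algebra_simps power2_eq_square)
  also have "\<dots> \<le> (1 + a) * 1" using st by (intro mult_left_mono) auto
  finally have "(1 - a) * (1 + a + b) * (1 + a - b) \<le> 1 + a" by simp
  thus ?thesis unfolding P22_def using X by (simp add: divide_simps)
qed

lemma frac_aux: fixes a b c d k :: real assumes "k \<noteq> 0"
  shows "(a / k) / ((b / k) * c * (d / k)) = (k * a) / (c * b * d)"
proof -
  have "(a / k) / ((b / k) * c * (d / k)) = (a / k) / ((b * c * d) / (k * k))" by (simp add: mult_ac)
  also have "\<dots> = (a / k) * ((k * k) / (b * c * d))" by simp
  also have "\<dots> = (k * a) / (c * b * d)" using assms by (simp add: mult_ac)
  finally show ?thesis .
qed

lemma mode_params: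
  fixes c \<rho> \<alpha> \<beta> \<sigma> lam v w :: real
  assumes c0: "0 \<le> c" and c2: "c \<le> 1/2" and r0: "0 < \<rho>" and r1: "\<rho> < 1"
    and hv: "v * (1 - c) = - \<rho> * (1 - c * \<rho>)" and hw: "w * (1 + c) = \<rho> * (1 - c * \<rho>)"
    and bet: "\<beta> = c * \<rho> / (1 - c * \<rho>)"
    and lo: "v \<le> \<alpha> * lam - 1" and hi: "\<alpha> * lam - 1 \<le> w"
  shows "stab (ca \<alpha> \<beta> \<beta> lam) (cb \<alpha> \<beta> \<beta> lam)"
    and "Jhat \<alpha> \<beta> \<beta> \<sigma> lam = \<sigma>\<^sup>2 * (DD (c * \<rho>) (\<alpha> * lam - 1) / NN (c * \<rho>) (\<alpha> * lam - 1))"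
proof -
  define u where "u = \<alpha> * lam - 1"
  define p where "p = c * \<rho>"
  define k where "k = 1 - p"
  note rp = range_pos[OF c0 c2 r0 r1 hv hw lo hi, folded u_def p_def, folded k_def]
  have k0: "k > 0" using basic_pos[OF c0 c2 r0 r1] by (simp add: k_def p_def)
  have b: "\<beta> = p / k" using bet by (simp add: p_def k_def)
  have ea: "ca \<alpha> \<beta> \<beta> lam = - \<beta> * u" by (simp add: ca_def u_def algebra_simps)
  have eb: "cb \<alpha> \<beta> \<beta> lam = (1 + \<beta>) * u" by (simp add: cb_def u_def algebra_simps)
  have f1: "1 + (- \<beta> * u) = (k - p * u) / k" using k0 by (simp add: b field_simps)
  have f2: "1 - (- \<beta> * u) = (k + p * u) / k" using k0 by (simp add: b field_simps)
  have f3: "1 + (- \<beta> * u) + (1 + \<beta>) * u = 1 + u" by (simp add: algebra_simps)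
  have "1 + (- \<beta> * u) - (1 + \<beta>) * u = (k - (k + 2 * p) * u) / k" using k0
    by (simp add: b field_simps)
  moreover have "k + 2 * p = 1 + p" by (simp add: k_def)
  ultimately have f4: "1 + (- \<beta> * u) - (1 + \<beta>) * u = (k - (1 + p) * u) / k" by simp
  have s1: "1 + (- \<beta> * u) > 0" unfolding f1 using rp k0 by (simp add: k_def)
  have s2: "1 - (- \<beta> * u) > 0" unfolding f2 using rp k0 by (simp add: k_def)
  have s3: "1 + (- \<beta> * u) + (1 + \<beta>) * u > 0" unfolding f3 using rp by simp
  have s4: "1 + (- \<beta> * u) - (1 + \<beta>) * u > 0" unfolding f4 using rp k0 by (simp add: k_def)
  show "stab (ca \<alpha> \<beta> \<beta> lam) (cb \<alpha> \<beta> \<beta> lam)"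
    unfolding stab_def ea eb using s1 s2 s3 s4 by blast
  have "P22 (- \<beta> * u) ((1 + \<beta>) * u) = DD p u / NN p u"
  proof -
    have "P22 (- \<beta> * u) ((1 + \<beta>) * u) = ((k - p * u) / k) / (((k + p * u) / k) * (1 + u) * ((k - (1 + p) * u) / k))"
      unfolding P22_def f3 f4 unfolding f1 f2 ..
    also have "\<dots> = (k * (k - p * u)) / ((1 + u) * (k + p * u) * (k - (1 + p) * u))"
      using k0 by (rule frac_aux[OF less_imp_neq[symmetric]])
    also have "\<dots> = DD p u / NN p u" unfolding DD_def NN_def k_def ..
    finally show ?thesis .
  qed
  thus "Jhat \<alpha> \<beta> \<beta> \<sigma> lam = \<sigma>\<^sup>2 * (DD (c * \<rho>) (\<alpha> * lam - 1) / NN (c * \<rho>) (\<alpha> * lam - 1))"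
    unfolding Jhat_P22 ea eb by (simp add: u_def p_def)
qed


definition diagm :: "('n::finite \<Rightarrow> real) \<Rightarrow> real^'n^'n" where
  "diagm e = (\<chi> i j. if i = j then e i else 0)"

lemma diagm_mult: "diagm e *v x = (\<chi> i. e i * x $ i)"
  by (simp add: diagm_def matrix_vector_mult_def vec_eq_iff if_distrib[of "\<lambda>t. t * _"] cong: if_cong)

lemma diagm_transpose: "transpose (diagm e) = diagm e"
  by (simp add: diagm_def transpose_def vec_eq_iff)

lemma diagm_pd:
  assumes pos: "\<And>i. e i > 0" and x0: "x \<noteq> 0"
  shows "x \<bullet> (diagm e *v x) > 0"
proof -
  obtain i where xi: "x $ i \<noteq> 0" using x0 by (auto simp: vec_eq_iff)
  have "x \<bullet> (diagm e *v x) = (\<Sum>j\<in>UNIV. e j * (x $ j)\<^sup>2)"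
    by (simp add: diagm_mult inner_vec_def power2_eq_square mult_ac)
  also have "\<dots> > 0"
    using sum_pos2[of UNIV i "\<lambda>j. e j * (x $ j)\<^sup>2"] pos xi by (simp add: less_imp_le)
  finally show ?thesis .
qed

lemma diagm_axis: "diagm e *v axis i 1 = e i *\<^sub>R axis i 1"
  by (simp add: diagm_mult vec_eq_iff axis_def)

lemma diagm_eig: "is_eigenvalue (diagm e) lam \<longleftrightarrow> (\<exists>i. lam = e i)"
proof
  assume "is_eigenvalue (diagm e) lam"
  then obtain v where v0: "v \<noteq> 0" and ev: "diagm e *v v = lam *\<^sub>R v" by (auto simp: is_eigenvalue_def)
  obtain i where vi: "v $ i \<noteq> 0" using v0 by (auto simp: vec_eq_iff)
  have "e i * v $ i = lam * v $ i" using ev by (auto simp: diagm_mult vec_eq_iff)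
  thus "\<exists>i. lam = e i" using vi by auto
next
  assume "\<exists>i. lam = e i"
  then obtain i where "lam = e i" by blast
  thus "is_eigenvalue (diagm e) lam" unfolding is_eigenvalue_def
    by (intro exI[of _ "axis i 1"]) (simp add: diagm_axis axis_eq_0_iff)
qed

lemma range_axis_Basis: "range (\<lambda>i. axis i (1::real)) = (Basis :: (real^'n) set)"
  by (auto simp: Basis_vec_def)

lemma diagm_eigbasis: "eigbasis (diagm e) (range (\<lambda>i. axis i 1)) \<and> span (range (\<lambda>i. axis i (1::real))) = UNIV"
proof
  show "span (range (\<lambda>i. axis i (1::real))) = UNIV" unfolding range_axis_Basis by (rule span_Basis)
  show "eigbasis (diagm e) (range (\<lambda>i. axis i 1))"
    unfolding eigbasis_def
  proof
    show "pairwise orthogonal (range (\<lambda>i. axis i (1::real)))"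
      by (auto simp: pairwise_def orthogonal_def inner_axis_axis)
    show "\<forall>b\<in>range (\<lambda>i. axis i 1). norm b = 1 \<and> diagm e *v b = (b \<bullet> (diagm e *v b)) *\<^sub>R b"
      by (auto simp: diagm_axis inner_axis_axis)
  qed
qed

lemma sum_range_axis: "(\<Sum>b\<in>range (\<lambda>i. axis i (1::real)). f b) = (\<Sum>i\<in>(UNIV::'n::finite set). f (axis i 1))"
  by (subst sum.reindex) (auto simp: inj_on_def axis_eq_axis)

lemma diagm_axis_val: "axis i 1 \<bullet> (diagm e *v axis i 1) = e i"
  by (simp add: diagm_axis inner_axis_axis)


lemma class_facts:
  fixes Q :: "real^'n^'n" and w :: "nat \<Rightarrow> 'a \<Rightarrow> real^'n"
  assumes cls: "(Q, q) \<in> quad_class m L" and wn: "white_noise M w"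
    and st: "\<And>lam. m \<le> lam \<Longrightarrow> lam \<le> L \<Longrightarrow> stab (ca \<alpha> \<beta> \<gamma> lam) (cb \<alpha> \<beta> \<gamma> lam)"
  shows "\<exists>B. card B = CARD('n) \<and> finite B
     \<and> noise_avg M \<alpha> \<beta> \<gamma> \<sigma> Q q w x0 x1 \<longlonglongrightarrow> (\<Sum>b\<in>B. Jhat \<alpha> \<beta> \<gamma> \<sigma> (b \<bullet> (Q *v b)))
     \<and> (\<forall>b\<in>B. m \<le> b \<bullet> (Q *v b) \<and> b \<bullet> (Q *v b) \<le> L)
     \<and> (\<exists>b0\<in>B. b0 \<bullet> (Q *v b0) = L) \<and> (\<exists>b1\<in>B. b1 \<bullet> (Q *v b1) = m)"
proof -
  have sym: "transpose Q = Q" and pd: "\<forall>x. x \<noteq> 0 \<longrightarrow> x \<bullet> (Q *v x) > 0"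
    and eL: "is_eigenvalue Q L" and leL: "\<forall>lam. is_eigenvalue Q lam \<longrightarrow> lam \<le> L"
    and em: "is_eigenvalue Q m" and gem: "\<forall>lam. is_eigenvalue Q lam \<longrightarrow> m \<le> lam"
    using cls by (auto simp: quad_class_def)
  obtain B where eb: "eigbasis Q B" and sp: "span B = UNIV" using eigbasis_exists[OF sym] by blast
  have rng: "\<forall>b\<in>B. m \<le> b \<bullet> (Q *v b) \<and> b \<bullet> (Q *v b) \<le> L"
  proof
    fix b assume bB: "b \<in> B"
    have "norm b = 1" "Q *v b = (b \<bullet> (Q *v b)) *\<^sub>R b" using eb bB by (auto simp: eigbasis_def)
    hence "is_eigenvalue Q (b \<bullet> (Q *v b))" unfolding is_eigenvalue_def
      by (intro exI[of _ b]) auto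
    thus "m \<le> b \<bullet> (Q *v b) \<and> b \<bullet> (Q *v b) \<le> L" using leL gem by blast
  qed
  have lim: "noise_avg M \<alpha> \<beta> \<gamma> \<sigma> Q q w x0 x1 \<longlonglongrightarrow> (\<Sum>b\<in>B. Jhat \<alpha> \<beta> \<gamma> \<sigma> (b \<bullet> (Q *v b)))"
    by (rule noise_limit[OF sym pd wn eb sp]) (use rng st in blast)
  have b0: "\<exists>b0\<in>B. b0 \<bullet> (Q *v b0) = L"
  proof -
    obtain v where "v \<noteq> 0" "Q *v v = L *\<^sub>R v" using eL by (auto simp: is_eigenvalue_def)
    thus ?thesis using eigbasis_eig[OF sym eb sp] by blast
  qed
  have b1: "\<exists>b1\<in>B. b1 \<bullet> (Q *v b1) = m"
  proof -
    obtain v where "v \<noteq> 0" "Q *v v = m *\<^sub>R v" using em by (auto simp: is_eigenvalue_def)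
    thus ?thesis using eigbasis_eig[OF sym eb sp] by blast
  qed
  show ?thesis using eigbasis_card[OF eb sp] eigbasis_finite[OF eb] lim rng b0 b1 by blast
qed

lemma diag_class:
  fixes e :: "'n::finite \<Rightarrow> real"
  assumes pos: "\<And>i. e i > 0" and rng: "\<And>i. m \<le> e i \<and> e i \<le> L"
    and iL: "e ia = L" and im: "e ib = m"
  shows "(diagm e, q) \<in> quad_class m L"
  unfolding quad_class_def using diagm_transpose diagm_pd[OF pos] rng iL im
  by (auto simp: diagm_eig)

lemma diag_amp:
  fixes e :: "'n::finite \<Rightarrow> real" and w :: "nat \<Rightarrow> 'a \<Rightarrow> real^'n"
  assumes pos: "\<And>i. e i > 0" and wn: "white_noise M w"
    and st: "\<And>i. stab (ca \<alpha> \<beta> \<gamma> (e i)) (cb \<alpha> \<beta> \<gamma> (e i))"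
  shows "noise_amp M \<alpha> \<beta> \<gamma> \<sigma> (diagm e) q w x0 x1 = (\<Sum>i\<in>UNIV. Jhat \<alpha> \<beta> \<gamma> \<sigma> (e i))"
proof -
  have eb: "eigbasis (diagm e) (range (\<lambda>i. axis i 1))" and sp: "span (range (\<lambda>i. axis i (1::real))) = UNIV"
    using diagm_eigbasis by blast+
  have "noise_avg M \<alpha> \<beta> \<gamma> \<sigma> (diagm e) q w x0 x1 \<longlonglongrightarrow>
      (\<Sum>b\<in>range (\<lambda>i. axis i 1). Jhat \<alpha> \<beta> \<gamma> \<sigma> (b \<bullet> (diagm e *v b)))"
    by (rule noise_limit[OF diagm_transpose _ wn eb sp])
       (use diagm_pd[OF pos] st in \<open>auto simp: diagm_axis_val\<close>)
  hence "noise_avg M \<alpha> \<beta> \<gamma> \<sigma> (diagm e) q w x0 x1 \<longlonglongrightarrow> (\<Sum>i\<in>UNIV. Jhat \<alpha> \<beta> \<gamma> \<sigma> (e i))"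
    by (simp add: sum_range_axis diagm_axis_val)
  thus ?thesis unfolding noise_amp_def by (rule limI)
qed


theorem corollary3:
  fixes m L \<kappa> \<rho> c \<alpha> \<beta> \<gamma> \<sigma> r :: real
    and M :: "'a measure" and w :: "nat \<Rightarrow> 'a \<Rightarrow> real^'n" and x0 x1 :: "real^'n"
  assumes n2: "CARD('n) \<ge> 2"
    and mL: "0 < m" "m \<le> L"
    and kappa: "\<kappa> = L / m"
    and rho: "0 < \<rho>" "\<rho> < 1"
    and rho_range: "sqrt (3 * \<kappa> + 1) / 2 \<le> 1 / (1 - \<rho>)" "1 / (1 - \<rho>) \<le> (\<kappa> + 1) / 2"
    and c_range: "0 \<le> c" "c \<le> 1/2"
    and c_eq: "\<kappa> * (1 - \<rho>) * (1 - c * \<rho> - c\<^sup>2 * (1 + \<rho>))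
               = (1 + \<rho>) * (1 - c * \<rho> - c\<^sup>2 * (1 - \<rho>))"
    and alpha: "\<alpha> = (1 + \<rho>) * (1 + c - c * \<rho>) / (L * (1 + c))"
    and beta: "\<beta> = c * \<rho>\<^sup>2 / ((\<alpha> * L - 1) * (1 + c))"
    and gamma: "\<gamma> = \<beta>"
    and sigma: "\<sigma> \<ge> 0"
    and noise: "white_noise M w"
    and r_def: "r = (1 + c) * (1 - c + c * \<rho>) / ((1 - c) * (1 + c - c * \<rho>))"
  shows
    "(\<forall>(Q, q) \<in> quad_class m L. convergent (noise_avg M \<alpha> \<beta> \<gamma> \<sigma> Q q w x0 x1))
   \<and> (\<exists>(Q, q) \<in> quad_class m L. noise_amp M \<alpha> \<beta> \<gamma> \<sigma> Q q w x0 x1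
         = (real CARD('n) - 1) * Jhat \<alpha> \<beta> \<gamma> \<sigma> m + Jhat \<alpha> \<beta> \<gamma> \<sigma> L)
   \<and> (\<forall>(Q, q) \<in> quad_class m L. noise_amp M \<alpha> \<beta> \<gamma> \<sigma> Q q w x0 x1
         \<le> (real CARD('n) - 1) * Jhat \<alpha> \<beta> \<gamma> \<sigma> m + Jhat \<alpha> \<beta> \<gamma> \<sigma> L)
   \<and> (\<exists>(Q, q) \<in> quad_class m L. noise_amp M \<alpha> \<beta> \<gamma> \<sigma> Q q w x0 x1
         = Jhat \<alpha> \<beta> \<gamma> \<sigma> m + Jhat \<alpha> \<beta> \<gamma> \<sigma> L
           + (real CARD('n) - 2) * Jhat \<alpha> \<beta> \<gamma> \<sigma> (1 / \<alpha>))
   \<and> (\<forall>(Q, q) \<in> quad_class m L. Jhat \<alpha> \<beta> \<gamma> \<sigma> m + Jhat \<alpha> \<beta> \<gamma> \<sigma> L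
           + (real CARD('n) - 2) * Jhat \<alpha> \<beta> \<gamma> \<sigma> (1 / \<alpha>)
         \<le> noise_amp M \<alpha> \<beta> \<gamma> \<sigma> Q q w x0 x1)
   \<and> Jhat \<alpha> \<beta> \<gamma> \<sigma> m = \<sigma>\<^sup>2 * (1 - c)\<^sup>2 * (r * \<kappa> + 1)
        / (2 * (1 - c - c * \<rho>\<^sup>2) * (1 + \<rho>) * (1 - c + c * \<rho>))
   \<and> Jhat \<alpha> \<beta> \<gamma> \<sigma> L = \<sigma>\<^sup>2 * (1 + c)\<^sup>2 * (1 + c - c * \<rho>\<^sup>2)
        / ((1 - \<rho>\<^sup>2) * (1 + c - c * \<rho>) * (1 + c + c * \<rho>) * (1 + c + c * \<rho>\<^sup>2))
   \<and> Jhat \<alpha> \<beta> \<gamma> \<sigma> (1 / \<alpha>) = \<sigma>\<^sup>2"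
proof -
  note bp = basic_pos[OF c_range(1) c_range(2) rho(1) rho(2)]
  have m0: "m > 0" using mL by simp
  have L0: "L > 0" using mL by simp
  have "1 / (1 - \<rho>) > 1" using rho by (simp add: field_simps)
  hence "1 < (\<kappa> + 1) / 2" using rho_range(2) by (rule less_le_trans)
  hence kap1: "\<kappa> > 1" by simp
  have mk: "m * \<kappa> = L" using kappa m0 by simp
  have Lm: "m < L"
  proof -
    have "m * 1 < m * \<kappa>" using kap1 m0 by (intro mult_strict_left_mono) auto
    thus ?thesis using mk by simp
  qed
  have c1: "1 - c > 0" "1 + c > 0" using c_range by auto
  have Lc: "L * (1 + c) \<noteq> 0" using L0 c1 by simp
  have "\<alpha> * (L * (1 + c)) = (1 + \<rho>) * (1 + c - c * \<rho>)"
    unfolding alpha using Lc by simp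
  hence aL: "\<alpha> * L * (1 + c) = (1 + \<rho>) * (1 + c - c * \<rho>)" by (simp add: mult.assoc)
  have a0: "\<alpha> > 0" unfolding alpha using rho bp L0 c1 by (intro divide_pos_pos mult_pos_pos) auto
  define wL where "wL = \<alpha> * L - 1"
  have hw: "wL * (1 + c) = \<rho> * (1 - c * \<rho>)" using aL unfolding wL_def by algebra
  have w0: "wL > 0"
  proof -
    have "wL * (1 + c) > 0" using hw rho bp by simp
    thus ?thesis using c1 pos_of_mult by blast
  qed
  have bet: "\<beta> = c * \<rho> / (1 - c * \<rho>)"
  proof -
    have "(\<alpha> * L - 1) * (1 + c) = \<rho> * (1 - c * \<rho>)" using hw by (simp add: wL_def)
    hence "\<beta> = c * \<rho>\<^sup>2 / (\<rho> * (1 - c * \<rho>))" using beta by simp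
    thus ?thesis using rho by (simp add: power2_eq_square)
  qed
  have ceq2: "\<kappa> * (1 - \<rho>) * (1 + c) * (1 - c - c * \<rho>) = (1 + \<rho>) * (1 - c) * (1 + c - c * \<rho>)"
    using c_eq by algebra
  define v where "v = \<alpha> * m - 1"
  have hv: "v * (1 - c) = - \<rho> * (1 - c * \<rho>)"
  proof -
    have "(\<alpha> * m * (1 - c)) * (\<kappa> * (1 + c)) = ((1 - \<rho>) * (1 - c - c * \<rho>)) * (\<kappa> * (1 + c))"
      using aL ceq2 mk by algebra
    moreover have "\<kappa> * (1 + c) \<noteq> 0" using kap1 c1 by simp
    ultimately have "\<alpha> * m * (1 - c) = (1 - \<rho>) * (1 - c - c * \<rho>)" by simp
    thus ?thesis unfolding v_def by algebra
  qed
  have v0: "v < 0"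
  proof -
    have "v * (1 - c) < 0" using hv rho bp by simp
    thus ?thesis using c1 by (simp add: mult_less_0_iff)
  qed
  have lrange: "v \<le> \<alpha> * lam - 1 \<and> \<alpha> * lam - 1 \<le> wL" if "m \<le> lam" "lam \<le> L" for lam
    using that a0 unfolding v_def wL_def by (simp add: mult_left_mono)
  note mp = mode_params[OF c_range(1) c_range(2) rho(1) rho(2) hv hw bet]
  have stabL: "stab (ca \<alpha> \<beta> \<gamma> lam) (cb \<alpha> \<beta> \<gamma> lam)" if "m \<le> lam" "lam \<le> L" for lam
    unfolding gamma using mp(1) lrange[OF that] by blast
  have Jform: "Jhat \<alpha> \<beta> \<gamma> \<sigma> lam = \<sigma>\<^sup>2 * (DD (c * \<rho>) (\<alpha> * lam - 1) / NN (c * \<rho>) (\<alpha> * lam - 1))"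
    if "m \<le> lam" "lam \<le> L" for lam
    unfolding gamma using mp(2) lrange[OF that] by blast
  have Jmax: "Jhat \<alpha> \<beta> \<gamma> \<sigma> lam \<le> Jhat \<alpha> \<beta> \<gamma> \<sigma> m" if "m \<le> lam" "lam \<le> L" for lam
  proof -
    have "DD (c * \<rho>) (\<alpha> * lam - 1) / NN (c * \<rho>) (\<alpha> * lam - 1) \<le> DD (c * \<rho>) v / NN (c * \<rho>) v"
      using K2[OF c_range(1) c_range(2) rho(1) rho(2) hv hw] lrange[OF that] by blast
    hence "\<sigma>\<^sup>2 * (DD (c * \<rho>) (\<alpha> * lam - 1) / NN (c * \<rho>) (\<alpha> * lam - 1)) \<le> \<sigma>\<^sup>2 * (DD (c * \<rho>) v / NN (c * \<rho>) v)"
      by (intro mult_left_mono) auto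
    thus ?thesis using Jform[OF that] Jform[of m] mL Lm by (simp add: v_def)
  qed
  have Jmin: "\<sigma>\<^sup>2 \<le> Jhat \<alpha> \<beta> \<gamma> \<sigma> lam" if "m \<le> lam" "lam \<le> L" for lam
  proof -
    have "P22 (ca \<alpha> \<beta> \<gamma> lam) (cb \<alpha> \<beta> \<gamma> lam) \<ge> 1" by (rule P22_ge1[OF stabL[OF that]])
    hence "\<sigma>\<^sup>2 * 1 \<le> \<sigma>\<^sup>2 * P22 (ca \<alpha> \<beta> \<gamma> lam) (cb \<alpha> \<beta> \<gamma> lam)" by (intro mult_left_mono) auto
    thus ?thesis by (simp add: Jhat_P22)
  qed
  have J1a: "Jhat \<alpha> \<beta> \<gamma> \<sigma> (1 / \<alpha>) = \<sigma>\<^sup>2"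
    using a0 unfolding Jhat_def Let_def gamma by simp
  have ainv: "m \<le> 1 / \<alpha>" "1 / \<alpha> \<le> L"
    using v0 w0 a0 unfolding v_def wL_def by (simp_all add: field_simps)
  have k0: "1 - c * \<rho> > 0" using bp by simp
  have nz: "1 - \<rho> \<noteq> 0" "1 + \<rho> \<noteq> 0" "1 - c - c * \<rho> \<noteq> 0" "1 - c - c * \<rho>\<^sup>2 \<noteq> 0" "1 - c + c * \<rho> \<noteq> 0"
    "1 + c - c * \<rho> \<noteq> 0" "1 + c + c * \<rho> \<noteq> 0" "1 + c + c * \<rho>\<^sup>2 \<noteq> 0" "1 + c - c * \<rho>\<^sup>2 \<noteq> 0" "1 - c + c * \<rho>\<^sup>2 \<noteq> 0"
    "1 - c \<noteq> 0" "1 + c \<noteq> 0" "1 - c * \<rho> \<noteq> 0"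
    using bp rho c1 by auto
  have Jm_form: "Jhat \<alpha> \<beta> \<gamma> \<sigma> m = \<sigma>\<^sup>2 * (1 - c)\<^sup>2 * (r * \<kappa> + 1)
        / (2 * (1 - c - c * \<rho>\<^sup>2) * (1 + \<rho>) * (1 - c + c * \<rho>))"
  proof -
    define A where "A = 1 + c"
    define B where "B = 1 - c + c * \<rho>"
    define C where "C = 1 - c"
    define E where "E = 1 + c - c * \<rho>"
    define F where "F = 1 + \<rho>"
    define G where "G = 1 - \<rho>"
    define H where "H = 1 - c - c * \<rho>"
    define X where "X = 1 - c + c * \<rho>\<^sup>2"
    define S where "S = 1 - c - c * \<rho>\<^sup>2"
    define K where "K = (1 - c * \<rho>)\<^sup>2"
    have nz': "A \<noteq> 0" "B \<noteq> 0" "C \<noteq> 0" "E \<noteq> 0" "F \<noteq> 0" "G \<noteq> 0" "H \<noteq> 0" "X \<noteq> 0" "S \<noteq> 0" "K \<noteq> 0"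
      using nz unfolding A_def B_def C_def E_def F_def G_def H_def X_def S_def K_def by auto
    have kap: "\<kappa> = (F * C * E) / (G * A * H)"
    proof -
      have D: "G * A * H \<noteq> 0" using nz' by simp
      have "\<kappa> * (G * A * H) = F * C * E" using ceq2 unfolding A_def C_def E_def F_def G_def H_def
        by (simp add: mult.assoc mult.left_commute)
      thus ?thesis using D by (simp add: eq_divide_eq)
    qed
    have rr: "r = (A * B) / (C * E)" unfolding r_def A_def B_def C_def E_def ..
    have "r * \<kappa> = (B * F) / (G * H)" unfolding kap rr using nz' by (simp add: field_simps)
    also have "\<dots> = (B * F + G * H) / (G * H) - 1" using nz' by (simp add: field_simps)
    also have "B * F + G * H = 2 * X" unfolding B_def F_def G_def H_def X_def by algebra
    finally have rk: "r * \<kappa> + 1 = 2 * X / (G * H)" by simp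
    have DDv: "DD (c * \<rho>) v = K * X / C"
      using closed_m(2)[OF hv] nz' unfolding K_def X_def C_def by (simp add: eq_divide_eq)
    have NNv: "NN (c * \<rho>) v = K * G * F * H * S * B / C ^ 3"
      using closed_m(1)[OF hv] nz' unfolding K_def G_def F_def H_def S_def B_def C_def by (simp add: eq_divide_eq)
    have "Jhat \<alpha> \<beta> \<gamma> \<sigma> m = \<sigma>\<^sup>2 * (DD (c * \<rho>) v / NN (c * \<rho>) v)"
      using Jform[of m] mL Lm by (simp add: v_def)
    also have "\<dots> = \<sigma>\<^sup>2 * C\<^sup>2 * (2 * X / (G * H)) / (2 * S * F * B)"
      unfolding DDv NNv using nz' by (simp add: field_simps power2_eq_square power3_eq_cube)
    finally show ?thesis unfolding rk[symmetric] C_def S_def F_def B_def .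
  qed
  have JL_form: "Jhat \<alpha> \<beta> \<gamma> \<sigma> L = \<sigma>\<^sup>2 * (1 + c)\<^sup>2 * (1 + c - c * \<rho>\<^sup>2)
        / ((1 - \<rho>\<^sup>2) * (1 + c - c * \<rho>) * (1 + c + c * \<rho>) * (1 + c + c * \<rho>\<^sup>2))"
  proof -
    define A where "A = 1 + c"
    define E where "E = 1 + c - c * \<rho>"
    define F where "F = 1 + \<rho>"
    define G where "G = 1 - \<rho>"
    define T where "T = 1 + c + c * \<rho>"
    define X where "X = 1 + c - c * \<rho>\<^sup>2"
    define S where "S = 1 + c + c * \<rho>\<^sup>2"
    define K where "K = (1 - c * \<rho>)\<^sup>2"
    have nz': "A \<noteq> 0" "E \<noteq> 0" "F \<noteq> 0" "G \<noteq> 0" "T \<noteq> 0" "X \<noteq> 0" "S \<noteq> 0" "K \<noteq> 0"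
      using nz unfolding A_def E_def F_def G_def T_def X_def S_def K_def by auto
    have DDw: "DD (c * \<rho>) wL = K * X / A"
      using closed_L(2)[OF hw] nz' unfolding K_def X_def A_def by (simp add: eq_divide_eq)
    have NNw: "NN (c * \<rho>) wL = K * F * G * E * S * T / A ^ 3"
      using closed_L(1)[OF hw] nz' unfolding K_def F_def G_def E_def S_def T_def A_def by (simp add: eq_divide_eq)
    have rr: "1 - \<rho>\<^sup>2 = G * F" unfolding G_def F_def by algebra
    have "Jhat \<alpha> \<beta> \<gamma> \<sigma> L = \<sigma>\<^sup>2 * (DD (c * \<rho>) wL / NN (c * \<rho>) wL)"
      using Jform[of L] mL Lm by (simp add: wL_def)
    also have "\<dots> = \<sigma>\<^sup>2 * A\<^sup>2 * X / ((G * F) * E * T * S)"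
      unfolding DDw NNw using nz' by (simp add: field_simps power2_eq_square power3_eq_cube)
    finally show ?thesis unfolding rr[symmetric] A_def X_def E_def T_def S_def .
  qed
  have Jm_ge: "\<sigma>\<^sup>2 \<le> Jhat \<alpha> \<beta> \<gamma> \<sigma> m" using Jmin[of m] mL Lm by simp
  have JL_le: "Jhat \<alpha> \<beta> \<gamma> \<sigma> L \<le> Jhat \<alpha> \<beta> \<gamma> \<sigma> m" using Jmax[of L] mL Lm by simp
  define n where "n = CARD('n)"
  obtain i0 :: 'n where "True" by simp
  obtain i1 :: 'n where i01: "i1 \<noteq> i0"
  proof -
    have "UNIV - {i0} \<noteq> {}"
    proof
      assume "UNIV - {i0} = {}"
      hence "(UNIV :: 'n set) = {i0}" by auto
      hence "CARD('n) = card {i0}" by (metis)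
      hence "CARD('n) = 1" by simp
      thus False using n2 by simp
    qed
    thus ?thesis using that by blast
  qed
  have CF: "\<exists>B. card B = CARD('n) \<and> finite B
     \<and> noise_avg M \<alpha> \<beta> \<gamma> \<sigma> Q q w x0 x1 \<longlonglongrightarrow> (\<Sum>b\<in>B. Jhat \<alpha> \<beta> \<gamma> \<sigma> (b \<bullet> (Q *v b)))
     \<and> (\<forall>b\<in>B. m \<le> b \<bullet> (Q *v b) \<and> b \<bullet> (Q *v b) \<le> L)
     \<and> (\<exists>b0\<in>B. b0 \<bullet> (Q *v b0) = L) \<and> (\<exists>b1\<in>B. b1 \<bullet> (Q *v b1) = m)"
    if "(Q, q) \<in> quad_class m L" for Q q
    by (rule class_facts[OF that noise stabL])
  have P1: "convergent (noise_avg M \<alpha> \<beta> \<gamma> \<sigma> Q q w x0 x1)" if "(Q, q) \<in> quad_class m L" for Q q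
    using CF[OF that] convergentI by blast
  have P3: "noise_amp M \<alpha> \<beta> \<gamma> \<sigma> Q q w x0 x1 \<le> (real CARD('n) - 1) * Jhat \<alpha> \<beta> \<gamma> \<sigma> m + Jhat \<alpha> \<beta> \<gamma> \<sigma> L"
    if cls: "(Q, q) \<in> quad_class m L" for Q q
  proof -
    obtain B where cB: "card B = CARD('n)" and fB: "finite B"
      and lim: "noise_avg M \<alpha> \<beta> \<gamma> \<sigma> Q q w x0 x1 \<longlonglongrightarrow> (\<Sum>b\<in>B. Jhat \<alpha> \<beta> \<gamma> \<sigma> (b \<bullet> (Q *v b)))"
      and rB: "\<forall>b\<in>B. m \<le> b \<bullet> (Q *v b) \<and> b \<bullet> (Q *v b) \<le> L"
      and b0: "\<exists>b0\<in>B. b0 \<bullet> (Q *v b0) = L"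
      using CF[OF cls] by blast
    obtain b0 where b0B: "b0 \<in> B" and lb0: "b0 \<bullet> (Q *v b0) = L" using b0 by blast
    have "noise_amp M \<alpha> \<beta> \<gamma> \<sigma> Q q w x0 x1 = (\<Sum>b\<in>B. Jhat \<alpha> \<beta> \<gamma> \<sigma> (b \<bullet> (Q *v b)))"
      unfolding noise_amp_def using lim by (rule limI)
    also have "\<dots> = Jhat \<alpha> \<beta> \<gamma> \<sigma> L + (\<Sum>b\<in>B - {b0}. Jhat \<alpha> \<beta> \<gamma> \<sigma> (b \<bullet> (Q *v b)))"
      using sum.remove[OF fB b0B, of "\<lambda>b. Jhat \<alpha> \<beta> \<gamma> \<sigma> (b \<bullet> (Q *v b))"] lb0 by simp
    also have "(\<Sum>b\<in>B - {b0}. Jhat \<alpha> \<beta> \<gamma> \<sigma> (b \<bullet> (Q *v b))) \<le> of_nat (card (B - {b0})) * Jhat \<alpha> \<beta> \<gamma> \<sigma> m"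
      by (rule sum_bounded_above) (use rB Jmax in auto)
    also have "of_nat (card (B - {b0})) = real CARD('n) - 1"
      using cB b0B fB n2 by (simp add: card_Diff_singleton of_nat_diff)
    finally show ?thesis by simp
  qed
  have P5: "Jhat \<alpha> \<beta> \<gamma> \<sigma> m + Jhat \<alpha> \<beta> \<gamma> \<sigma> L + (real CARD('n) - 2) * Jhat \<alpha> \<beta> \<gamma> \<sigma> (1 / \<alpha>)
      \<le> noise_amp M \<alpha> \<beta> \<gamma> \<sigma> Q q w x0 x1"
    if cls: "(Q, q) \<in> quad_class m L" for Q q
  proof -
    obtain B where cB: "card B = CARD('n)" and fB: "finite B"
      and lim: "noise_avg M \<alpha> \<beta> \<gamma> \<sigma> Q q w x0 x1 \<longlonglongrightarrow> (\<Sum>b\<in>B. Jhat \<alpha> \<beta> \<gamma> \<sigma> (b \<bullet> (Q *v b)))"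
      and rB: "\<forall>b\<in>B. m \<le> b \<bullet> (Q *v b) \<and> b \<bullet> (Q *v b) \<le> L"
      and b0: "\<exists>b0\<in>B. b0 \<bullet> (Q *v b0) = L" and b1: "\<exists>b1\<in>B. b1 \<bullet> (Q *v b1) = m"
      using CF[OF cls] by blast
    obtain b0 where b0B: "b0 \<in> B" and lb0: "b0 \<bullet> (Q *v b0) = L" using b0 by blast
    obtain b1 where b1B: "b1 \<in> B" and lb1: "b1 \<bullet> (Q *v b1) = m" using b1 by blast
    have b01: "b1 \<noteq> b0" using lb0 lb1 Lm by auto
    have "noise_amp M \<alpha> \<beta> \<gamma> \<sigma> Q q w x0 x1 = (\<Sum>b\<in>B. Jhat \<alpha> \<beta> \<gamma> \<sigma> (b \<bullet> (Q *v b)))"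
      unfolding noise_amp_def using lim by (rule limI)
    also have "\<dots> = Jhat \<alpha> \<beta> \<gamma> \<sigma> L + (\<Sum>b\<in>B - {b0}. Jhat \<alpha> \<beta> \<gamma> \<sigma> (b \<bullet> (Q *v b)))"
      using sum.remove[OF fB b0B, of "\<lambda>b. Jhat \<alpha> \<beta> \<gamma> \<sigma> (b \<bullet> (Q *v b))"] lb0 by simp
    also have "(\<Sum>b\<in>B - {b0}. Jhat \<alpha> \<beta> \<gamma> \<sigma> (b \<bullet> (Q *v b)))
        = Jhat \<alpha> \<beta> \<gamma> \<sigma> m + (\<Sum>b\<in>B - {b0} - {b1}. Jhat \<alpha> \<beta> \<gamma> \<sigma> (b \<bullet> (Q *v b)))"
      using sum.remove[of "B - {b0}" b1 "\<lambda>b. Jhat \<alpha> \<beta> \<gamma> \<sigma> (b \<bullet> (Q *v b))"] fB b1B b01 lb1 by simp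
    finally have e: "noise_amp M \<alpha> \<beta> \<gamma> \<sigma> Q q w x0 x1 = Jhat \<alpha> \<beta> \<gamma> \<sigma> L + (Jhat \<alpha> \<beta> \<gamma> \<sigma> m
        + (\<Sum>b\<in>B - {b0} - {b1}. Jhat \<alpha> \<beta> \<gamma> \<sigma> (b \<bullet> (Q *v b))))" .
    have "of_nat (card (B - {b0} - {b1})) * \<sigma>\<^sup>2 \<le> (\<Sum>b\<in>B - {b0} - {b1}. Jhat \<alpha> \<beta> \<gamma> \<sigma> (b \<bullet> (Q *v b)))"
      by (rule sum_bounded_below) (use rB Jmin in auto)
    moreover have "of_nat (card (B - {b0} - {b1})) = real CARD('n) - 2"
    proof -
      have "card (B - {b0} - {b1}) = card B - 2"
        using fB b0B b1B b01 by (simp add: card_Diff_singleton)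
      thus ?thesis using cB n2 by (simp add: of_nat_diff)
    qed
    ultimately show ?thesis using e J1a by (simp add: mult.commute)
  qed
  define emax where "emax i = (if i = i0 then L else m)" for i :: 'n
  have emax_pos: "\<And>i. emax i > 0" and emax_rng: "\<And>i. m \<le> emax i \<and> emax i \<le> L"
    using m0 L0 Lm by (auto simp: emax_def)
  have P2: "(diagm emax, 0) \<in> quad_class m L \<and> noise_amp M \<alpha> \<beta> \<gamma> \<sigma> (diagm emax) 0 w x0 x1
         = (real CARD('n) - 1) * Jhat \<alpha> \<beta> \<gamma> \<sigma> m + Jhat \<alpha> \<beta> \<gamma> \<sigma> L"
  proof
    show "(diagm emax, 0) \<in> quad_class m L"
      by (rule diag_class[OF emax_pos emax_rng, where ia=i0 and ib=i1]) (use i01 in \<open>simp_all add: emax_def\<close>)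
    have "noise_amp M \<alpha> \<beta> \<gamma> \<sigma> (diagm emax) 0 w x0 x1 = (\<Sum>i\<in>UNIV. Jhat \<alpha> \<beta> \<gamma> \<sigma> (emax i))"
      by (rule diag_amp[OF emax_pos noise]) (use emax_rng stabL in blast)
    also have "\<dots> = Jhat \<alpha> \<beta> \<gamma> \<sigma> L + (\<Sum>i\<in>UNIV - {i0}. Jhat \<alpha> \<beta> \<gamma> \<sigma> m)"
      using sum.remove[of UNIV i0 "\<lambda>i. Jhat \<alpha> \<beta> \<gamma> \<sigma> (emax i)"] by (simp add: emax_def)
    also have "\<dots> = (real CARD('n) - 1) * Jhat \<alpha> \<beta> \<gamma> \<sigma> m + Jhat \<alpha> \<beta> \<gamma> \<sigma> L"
      using n2 by (simp add: card_Diff_singleton of_nat_diff)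
    finally show "noise_amp M \<alpha> \<beta> \<gamma> \<sigma> (diagm emax) 0 w x0 x1
         = (real CARD('n) - 1) * Jhat \<alpha> \<beta> \<gamma> \<sigma> m + Jhat \<alpha> \<beta> \<gamma> \<sigma> L" .
  qed
  define emin where "emin i = (if i = i0 then L else if i = i1 then m else 1 / \<alpha>)" for i :: 'n
  have emin_pos: "\<And>i. emin i > 0" and emin_rng: "\<And>i. m \<le> emin i \<and> emin i \<le> L"
    using m0 L0 Lm a0 ainv by (auto simp: emin_def)
  have P4: "(diagm emin, 0) \<in> quad_class m L \<and> noise_amp M \<alpha> \<beta> \<gamma> \<sigma> (diagm emin) 0 w x0 x1
         = Jhat \<alpha> \<beta> \<gamma> \<sigma> m + Jhat \<alpha> \<beta> \<gamma> \<sigma> L + (real CARD('n) - 2) * Jhat \<alpha> \<beta> \<gamma> \<sigma> (1 / \<alpha>)"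
  proof
    show "(diagm emin, 0) \<in> quad_class m L"
      by (rule diag_class[OF emin_pos emin_rng, where ia=i0 and ib=i1]) (use i01 in \<open>simp_all add: emin_def\<close>)
    have "noise_amp M \<alpha> \<beta> \<gamma> \<sigma> (diagm emin) 0 w x0 x1 = (\<Sum>i\<in>UNIV. Jhat \<alpha> \<beta> \<gamma> \<sigma> (emin i))"
      by (rule diag_amp[OF emin_pos noise]) (use emin_rng stabL in blast)
    also have "\<dots> = Jhat \<alpha> \<beta> \<gamma> \<sigma> L + (\<Sum>i\<in>UNIV - {i0}. Jhat \<alpha> \<beta> \<gamma> \<sigma> (emin i))"
      using sum.remove[of UNIV i0 "\<lambda>i. Jhat \<alpha> \<beta> \<gamma> \<sigma> (emin i)"] by (simp add: emin_def)
    also have "(\<Sum>i\<in>UNIV - {i0}. Jhat \<alpha> \<beta> \<gamma> \<sigma> (emin i))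
        = Jhat \<alpha> \<beta> \<gamma> \<sigma> m + (\<Sum>i\<in>UNIV - {i0} - {i1}. Jhat \<alpha> \<beta> \<gamma> \<sigma> (emin i))"
      using sum.remove[of "UNIV - {i0}" i1 "\<lambda>i. Jhat \<alpha> \<beta> \<gamma> \<sigma> (emin i)"] i01 by (simp add: emin_def)
    also have "(\<Sum>i\<in>UNIV - {i0} - {i1}. Jhat \<alpha> \<beta> \<gamma> \<sigma> (emin i)) = (\<Sum>i\<in>UNIV - {i0} - {i1}. Jhat \<alpha> \<beta> \<gamma> \<sigma> (1 / \<alpha>))"
      by (rule sum.cong) (auto simp: emin_def)
    also have "\<dots> = (real CARD('n) - 2) * Jhat \<alpha> \<beta> \<gamma> \<sigma> (1 / \<alpha>)"
    proof -
      have "card ((UNIV::'n set) - {i0} - {i1}) = CARD('n) - 2" using i01 by (simp add: card_Diff_singleton)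
      thus ?thesis using n2 by (simp add: of_nat_diff)
    qed
    finally show "noise_amp M \<alpha> \<beta> \<gamma> \<sigma> (diagm emin) 0 w x0 x1
         = Jhat \<alpha> \<beta> \<gamma> \<sigma> m + Jhat \<alpha> \<beta> \<gamma> \<sigma> L + (real CARD('n) - 2) * Jhat \<alpha> \<beta> \<gamma> \<sigma> (1 / \<alpha>)"
      by simp
  qed
  show ?thesis
  proof (intro conjI)
    show "\<forall>(Q, q)\<in>quad_class m L. convergent (noise_avg M \<alpha> \<beta> \<gamma> \<sigma> Q q w x0 x1)" using P1 by auto
    show "\<exists>(Q, q)\<in>quad_class m L. noise_amp M \<alpha> \<beta> \<gamma> \<sigma> Q q w x0 x1
         = (real CARD('n) - 1) * Jhat \<alpha> \<beta> \<gamma> \<sigma> m + Jhat \<alpha> \<beta> \<gamma> \<sigma> L"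
      using P2 by blast
    show "\<forall>(Q, q)\<in>quad_class m L. noise_amp M \<alpha> \<beta> \<gamma> \<sigma> Q q w x0 x1
         \<le> (real CARD('n) - 1) * Jhat \<alpha> \<beta> \<gamma> \<sigma> m + Jhat \<alpha> \<beta> \<gamma> \<sigma> L" using P3 by auto
    show "\<exists>(Q, q)\<in>quad_class m L. noise_amp M \<alpha> \<beta> \<gamma> \<sigma> Q q w x0 x1
         = Jhat \<alpha> \<beta> \<gamma> \<sigma> m + Jhat \<alpha> \<beta> \<gamma> \<sigma> L
           + (real CARD('n) - 2) * Jhat \<alpha> \<beta> \<gamma> \<sigma> (1 / \<alpha>)" using P4 by blast
    show "\<forall>(Q, q)\<in>quad_class m L. Jhat \<alpha> \<beta> \<gamma> \<sigma> m + Jhat \<alpha> \<beta> \<gamma> \<sigma> L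
           + (real CARD('n) - 2) * Jhat \<alpha> \<beta> \<gamma> \<sigma> (1 / \<alpha>)
         \<le> noise_amp M \<alpha> \<beta> \<gamma> \<sigma> Q q w x0 x1" using P5 by auto
  qed (rule Jm_form, rule JL_form, rule J1a)
qed


end
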